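(* Let $A$ be a band operator on $\ell^2(\mathbb{Z})$ with band-width $w$. Then for all $T\in\{A-\lambda,(A-\lambda)^*:\lambda\in\mathbb{C}\}$ and all $N\in\mathbb{N}$, \[ \nu_N(T^+)=\min\Big\{\min_{j=1}^{w}\nu_{j..j+N-1}(T^+),\ \nu_N(T|_{\mathbb{N}})\Big\}, \] where, for $l,r\in\mathbb{N}$, $\nu_{l..r}(T^+)$ is the smallest singular value of the rectangular submatrix $(T^+_{ij})_{i\in1..r+w,\,j\in l..r}$ of $T^+$. If, additionally, $\mathcal{C}(A)=\mathcal{C}(A|_{\mathbb{N}})$, then $\nu_N(T|_{\mathbb{N}})=\nu_N(T)$, so that \[ \nu_N(T^+)=\min\Big\{\min_{j=1}^{w}\nu_{j..j+N-1}(T^+),\ \nu_N(T)\Big\}; \] in particular, $\nu(T^+)\le\nu(T)$ and $\|(T^+)^{-1}\|\ge\|T^{-1}\|$, so that $\sigma(A)\subseteq\sigma(A^+)$ and $\sigma_\varepsilon(A)\subseteq\sigma_\varepsilon(A^+)$ for all $\varepsilon>0$.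
   Context: $\mathbb{N}=\{1,2,\dots\}$, $a..b:=\{n\in\mathbb{Z}:a\le n\le b\}$. A band operator with band-width $w$ on $\ell^2(\mathbb{Z})$ is a bounded operator with matrix entries $A_{ij}=0$ for $|i-j|>w$. $T|_{\mathbb{N}}:\ell^2(\mathbb{N})\to\ell^2(\mathbb{Z})$ is the restriction of $T$ to $\ell^2(\mathbb{N})$ (matrix $(T_{ij})_{i\in\mathbb{Z},j\in\mathbb{N}}$); $T^+$ is the compression to $\ell^2(\mathbb{N})$ (matrix $(T_{ij})_{i,j\in\mathbb{N}}$). Lower norm: $\nu(T):=\inf\{\|Tx\|:\|x\|=1\}$; local lower norm: $\nu_N(T):=\inf\{\|Tx\|:\|x\|=1,\ \operatorname{diam}(\operatorname{supp}x)<N\}$; for a set $\mathbb{I}$, $\nu_{\mathbb{I}}(T):=\inf\{\|Tx\|:\operatorname{supp}x\subseteq\mathbb{I},\|x\|=1\}$. For $N\in\mathbb{N}$, an $N$-column submatrix of an operator $B$ with band-width $w$ is a $(N+2w)\times N$ matrix $C=(C_{ij})_{i\in 1-w..N+w,\,j\in1..N}$ with $C_{ij}=B_{k+i,k+j}$ for some $k\in\mathbb{Z}$ with $k+1..k+N$ inside the column index set ($C_{ij}:=0$ where undefined); $\mathcal{C}(B)$ is the set of all $N$-column submatrices of $B$ for all $N\in\mathbb{N}$. $\|T^{-1}\|:=\infty$ if $T$ is not invertible; $\sigma_\varepsilon(T):=\{\lambda:\|(T-\lambda)^{-1}\|>1/\varepsilon\}$. *)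

theory Defs
  imports "HOL-Analysis.Analysis"
begin

text \<open>Operators on l2(Z) are represented by their matrices (int => int => complex);
vectors by functions int => complex. l2(N) is the subspace of vectors supported in {1..}.\<close>

type_synonym mat = "int \<Rightarrow> int \<Rightarrow> complex"
type_synonym vec = "int \<Rightarrow> complex"

definition natset :: "int set" where "natset = {1..}"

definition supp :: "vec \<Rightarrow> int set" where "supp x = {i. x i \<noteq> 0}"

definition is_l2 :: "vec \<Rightarrow> bool" where
  "is_l2 x \<longleftrightarrow> (\<lambda>i. (cmod (x i))\<^sup>2) summable_on UNIV"

definition l2norm :: "vec \<Rightarrow> real" where
  "l2norm x = sqrt (\<Sum>\<^sub>\<infinity>i. (cmod (x i))\<^sup>2)"

text \<open>Band operator with band-width w: bounded operator whose matrix vanishes off the band.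
For band matrices, boundedness of the operator is equivalent to uniform boundedness of entries.\<close>
definition band_op :: "mat \<Rightarrow> nat \<Rightarrow> bool" where
  "band_op A w \<longleftrightarrow> (\<forall>i j. nat \<bar>i - j\<bar> > w \<longrightarrow> A i j = 0) \<and> (\<exists>C. \<forall>i j. cmod (A i j) \<le> C)"

definition mv :: "mat \<Rightarrow> vec \<Rightarrow> vec" where
  "mv T x = (\<lambda>i. \<Sum>\<^sub>\<infinity>j. T i j * x j)"

definition restr :: "int set \<Rightarrow> vec \<Rightarrow> vec" where
  "restr R v = (\<lambda>i. if i \<in> R then v i else 0)"

definition shiftm :: "mat \<Rightarrow> complex \<Rightarrow> mat" where
  "shiftm A z = (\<lambda>i j. A i j - (if i = j then z else 0))"

definition adj :: "mat \<Rightarrow> mat" where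
  "adj T = (\<lambda>i j. cnj (T j i))"

definition Ts :: "mat \<Rightarrow> mat set" where
  "Ts A = {shiftm A z | z. True} \<union> {adj (shiftm A z) | z. True}"

text \<open>nu_S(T) with input vectors supported in S and output compressed to rows O.
 T^+ : S \<subseteq> natset, O = natset;  T|_N : S \<subseteq> natset, O = UNIV;  T : O = UNIV.\<close>
definition lnu_set :: "int set \<Rightarrow> mat \<Rightarrow> int set \<Rightarrow> real" where
  "lnu_set S T R = Inf {l2norm (restr R (mv T x)) | x. is_l2 x \<and> supp x \<subseteq> S \<and> l2norm x = 1}"

text \<open>local lower norm: diam(supp x) < N, i.e. supp x inside N consecutive integers\<close>
definition lnu_loc :: "nat \<Rightarrow> mat \<Rightarrow> int set \<Rightarrow> int set \<Rightarrow> real" where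
  "lnu_loc N T S R = Inf {l2norm (restr R (mv T x)) | x. is_l2 x \<and> supp x \<subseteq> S \<and> l2norm x = 1
      \<and> (\<exists>k. supp x \<subseteq> {k + 1 .. k + int N})}"

definition L2on :: "int set \<Rightarrow> vec set" where
  "L2on S = {x. is_l2 x \<and> supp x \<subseteq> S}"

definition opS :: "mat \<Rightarrow> int set \<Rightarrow> vec \<Rightarrow> vec" where
  "opS T S = (\<lambda>x. restr S (mv T x))"

definition invertible_on :: "mat \<Rightarrow> int set \<Rightarrow> bool" where
  "invertible_on T S \<longleftrightarrow> bij_betw (opS T S) (L2on S) (L2on S)"

definition invnorm :: "mat \<Rightarrow> int set \<Rightarrow> ereal" where
  "invnorm T S = (if invertible_on T S
     then (SUP y \<in> {y \<in> L2on S. l2norm y = 1}. ereal (l2norm (inv_into (L2on S) (opS T S) y)))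
     else \<infinity>)"

definition spec :: "mat \<Rightarrow> int set \<Rightarrow> complex set" where
  "spec A S = {z. \<not> invertible_on (shiftm A z) S}"

definition pspec :: "real \<Rightarrow> mat \<Rightarrow> int set \<Rightarrow> complex set" where
  "pspec \<epsilon> A S = {z. invnorm (shiftm A z) S > ereal (1 / \<epsilon>)}"

text \<open>C(B): all N-column submatrices (as pairs (N, matrix padded by 0)) of B,
 whose column index set is J and whose rows are indexed by all of Z.\<close>
definition csubs :: "mat \<Rightarrow> int set \<Rightarrow> nat \<Rightarrow> (nat \<times> mat) set" where
  "csubs B J w = {(N, (\<lambda>i j. if i \<in> {1 - int w .. int N + int w} \<and> j \<in> {1 .. int N}
        then B (k + i) (k + j) else 0)) | N k. N \<ge> 1 \<and> {k + 1 .. k + int N} \<subseteq> J}"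

end

theory Submission
  imports Defs "HOL-Library.Diagonal_Subsequence"
begin


lemma sq_infsum_nonneg: "0 \<le> (\<Sum>\<^sub>\<infinity>i. (cmod (x i))^2)"
  by (rule infsum_nonneg) simp

lemma l2norm_sq: "(l2norm x)^2 = (\<Sum>\<^sub>\<infinity>i. (cmod (x i))^2)"
  unfolding l2norm_def using sq_infsum_nonneg by simp

lemma l2norm_nonneg[simp]: "0 \<le> l2norm x"
  unfolding l2norm_def using sq_infsum_nonneg by simp

lemma l2_fin_le:
  assumes "is_l2 x" "finite F"
  shows "(\<Sum>i\<in>F. (cmod (x i))^2) \<le> (l2norm x)^2"
  unfolding l2norm_sq using assms unfolding is_l2_def
  by (intro finite_sum_le_infsum) auto

lemma l2I:
  assumes "\<And>F. finite F \<Longrightarrow> (\<Sum>i\<in>F. (cmod (x i))^2) \<le> B"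
  shows "is_l2 x" "(l2norm x)^2 \<le> B"
proof -
  have s: "(\<lambda>i. (cmod (x i))^2) summable_on UNIV"
    by (rule nonneg_bdd_above_summable_on) (use assms in \<open>auto intro!: bdd_aboveI2\<close>)
  then show "is_l2 x" unfolding is_l2_def .
  show "(l2norm x)^2 \<le> B" unfolding l2norm_sq
    using s assms by (intro infsum_le_finite_sums) auto
qed

lemma l2I':
  assumes "0 \<le> B" "\<And>F. finite F \<Longrightarrow> (\<Sum>i\<in>F. (cmod (x i))^2) \<le> B^2"
  shows "is_l2 x \<and> l2norm x \<le> B"
  using l2I[OF assms(2)] assms(1) by (auto intro: power2_le_imp_le)

lemma l2_coord:
  assumes "is_l2 x" shows "cmod (x i) \<le> l2norm x"
  using l2_fin_le[OF assms, of "{i}"] by (auto intro: power2_le_imp_le)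

lemma l2_zero:
  assumes "is_l2 x" "l2norm x = 0" shows "x i = 0"
  using l2_coord[OF assms(1), of i] assms(2) by simp

lemma l2_cong:
  assumes "\<And>i. cmod (x i) = cmod (y i)"
  shows "is_l2 x = is_l2 y" "l2norm x = l2norm y"
  unfolding is_l2_def l2norm_def using assms by simp_all

lemma l2_approx:
  assumes "is_l2 x" "e > 0"
  shows "\<exists>F. finite F \<and> (l2norm x)^2 - e \<le> (\<Sum>i\<in>F. (cmod (x i))^2)"
proof -
  obtain F where F: "finite F" "dist (\<Sum>i\<in>F. (cmod (x i))^2) (\<Sum>\<^sub>\<infinity>i. (cmod (x i))^2) \<le> e"
    using infsum_finite_approximation[of "\<lambda>i. (cmod (x i))^2" UNIV e] assms
    unfolding is_l2_def by auto
  then show ?thesis unfolding l2norm_sq dist_real_def by (intro exI[of _ F]) auto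
qed

lemma infsum_finsupp:
  fixes f :: "'a \<Rightarrow> 'b::{comm_monoid_add,t2_space}"
  assumes "finite F" "\<And>j. j \<notin> F \<Longrightarrow> f j = 0"
  shows "infsum f UNIV = sum f F" "f summable_on UNIV"
proof -
  have "(f has_sum sum f F) F" using assms(1) by simp
  then have h: "(f has_sum sum f F) UNIV"
    using has_sum_cong_neutral[of F UNIV f f] assms(2) by auto
  then show "infsum f UNIV = sum f F" by (simp add: infsumI)
  show "f summable_on UNIV" using h by (auto simp: summable_on_def)
qed

lemma l2_finsupp:
  assumes "finite F" "supp x \<subseteq> F"
  shows "is_l2 x" "(l2norm x)^2 = (\<Sum>i\<in>F. (cmod (x i))^2)"
proof -
  have z: "\<And>j. j \<notin> F \<Longrightarrow> (cmod (x j))^2 = 0" using assms(2) unfolding supp_def by auto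
  show "is_l2 x" unfolding is_l2_def using infsum_finsupp(2)[OF assms(1) z] .
  show "(l2norm x)^2 = (\<Sum>i\<in>F. (cmod (x i))^2)" unfolding l2norm_sq
    using infsum_finsupp(1)[OF assms(1) z] .
qed

lemma L2_le:
  assumes "is_l2 x" "finite F"
  shows "L2_set (\<lambda>i. cmod (x i)) F \<le> l2norm x"
proof -
  have "L2_set (\<lambda>i. cmod (x i)) F \<le> sqrt ((l2norm x)^2)"
    unfolding L2_set_def using l2_fin_le[OF assms] by (rule real_sqrt_le_mono)
  also have "\<dots> = l2norm x" by simp
  finally show ?thesis .
qed

lemma L2_sq_le:
  assumes "L2_set f F \<le> a"
  shows "(\<Sum>i\<in>F. (f i)^2) \<le> a^2"
proof -
  have "(\<Sum>i\<in>F. (f i)^2) = (L2_set f F)^2"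
    unfolding L2_set_def by (simp add: sum_nonneg)
  also have "\<dots> \<le> a^2" using assms by (intro power_mono) (auto simp: L2_set_def sum_nonneg)
  finally show ?thesis .
qed

lemma l2_add:
  assumes "is_l2 x" "is_l2 y"
  shows "is_l2 (\<lambda>i. x i + y i) \<and> l2norm (\<lambda>i. x i + y i) \<le> l2norm x + l2norm y"
proof (rule l2I')
  fix F :: "int set" assume F: "finite F"
  have "L2_set (\<lambda>i. cmod (x i + y i)) F \<le> L2_set (\<lambda>i. cmod (x i) + cmod (y i)) F"
    by (rule L2_set_mono) (auto simp: norm_triangle_ineq)
  also have "\<dots> \<le> L2_set (\<lambda>i. cmod (x i)) F + L2_set (\<lambda>i. cmod (y i)) F"
    by (rule L2_set_triangle_ineq)
  also have "\<dots> \<le> l2norm x + l2norm y"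
    using L2_le[OF assms(1) F] L2_le[OF assms(2) F] by simp
  finally show "(\<Sum>i\<in>F. (cmod (x i + y i))^2) \<le> (l2norm x + l2norm y)^2"
    by (rule L2_sq_le)
qed simp

lemma l2_scale:
  assumes "is_l2 x"
  shows "is_l2 (\<lambda>i. c * x i) \<and> l2norm (\<lambda>i. c * x i) = cmod c * l2norm x"
proof
  have e: "(\<lambda>i. (cmod (c * x i))^2) = (\<lambda>i. (cmod c)^2 * (cmod (x i))^2)"
    by (simp add: norm_mult power_mult_distrib)
  show "is_l2 (\<lambda>i. c * x i)" using assms unfolding is_l2_def e
    by (intro summable_on_cmult_right)
  have "(l2norm (\<lambda>i. c * x i))^2 = (cmod c * l2norm x)^2"
    unfolding l2norm_sq e power_mult_distrib
    using assms unfolding is_l2_def by (simp add: infsum_cmult_right)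
  then show "l2norm (\<lambda>i. c * x i) = cmod c * l2norm x"
    by (rule power2_eq_imp_eq) auto
qed

lemma l2_uminus:
  shows "is_l2 (\<lambda>i. - x i) = is_l2 x" "l2norm (\<lambda>i. - x i) = l2norm x"
  by (rule l2_cong; simp)+

lemma l2_diff:
  assumes "is_l2 x" "is_l2 y"
  shows "is_l2 (\<lambda>i. x i - y i) \<and> l2norm (\<lambda>i. x i - y i) \<le> l2norm x + l2norm y"
  using l2_add[OF assms(1), of "\<lambda>i. - y i"] assms(2) l2_uminus[of y] by simp

lemma l2_diff_comm: "l2norm (\<lambda>i. x i - y i) = l2norm (\<lambda>i. y i - x i)"
  by (rule l2_cong) (simp add: norm_minus_commute)

lemma l2_dist_tri:
  assumes "is_l2 x" "is_l2 y" "is_l2 z"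
  shows "l2norm (\<lambda>i. x i - z i) \<le> l2norm (\<lambda>i. x i - y i) + l2norm (\<lambda>i. y i - z i)"
proof -
  have "is_l2 (\<lambda>i. x i - y i)" "is_l2 (\<lambda>i. y i - z i)" using l2_diff assms by blast+
  from l2_add[OF this] show ?thesis by simp
qed

lemma l2_sum:
  assumes "finite D" "\<And>d. d \<in> D \<Longrightarrow> is_l2 (u d) \<and> l2norm (u d) \<le> B"
  shows "is_l2 (\<lambda>i. \<Sum>d\<in>D. u d i) \<and> l2norm (\<lambda>i. \<Sum>d\<in>D. u d i) \<le> real (card D) * B"
  using assms
proof (induction D rule: finite_induct)
  case empty
  have "is_l2 (\<lambda>i. 0::complex) \<and> l2norm (\<lambda>i. 0::complex) \<le> 0"
    by (rule l2I') auto
  then show ?case by simp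
next
  case (insert a D)
  then have IH: "is_l2 (\<lambda>i. \<Sum>d\<in>D. u d i) \<and> l2norm (\<lambda>i. \<Sum>d\<in>D. u d i) \<le> real (card D) * B"
    by blast
  have ua: "is_l2 (u a) \<and> l2norm (u a) \<le> B" using insert by blast
  from l2_add[of "u a" "\<lambda>i. \<Sum>d\<in>D. u d i"] IH ua
  show ?case using insert(1,2) by (auto simp: algebra_simps)
qed

lemma bij_shift_int: "bij_betw (\<lambda>i::int. i + s) UNIV UNIV"
  by (rule bij_betw_byWitness[where f'="\<lambda>i. i - s"]) auto

lemma l2_shift:
  shows "is_l2 (\<lambda>i. x (i + s)) = is_l2 x" "l2norm (\<lambda>i. x (i + s)) = l2norm x"
proof -
  show "is_l2 (\<lambda>i. x (i + s)) = is_l2 x" unfolding is_l2_def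
    using summable_on_reindex_bij_betw[OF bij_shift_int[of s], of "\<lambda>i. (cmod (x i))^2"] by simp
  show "l2norm (\<lambda>i. x (i + s)) = l2norm x" unfolding l2norm_def
    using infsum_reindex_bij_betw[OF bij_shift_int[of s], of "\<lambda>i. (cmod (x i))^2"] by simp
qed

lemma l2_restr:
  assumes "is_l2 y"
  shows "is_l2 (restr R y) \<and> l2norm (restr R y) \<le> l2norm y"
proof (rule l2I')
  fix F :: "int set" assume F: "finite F"
  have "(\<Sum>i\<in>F. (cmod (restr R y i))^2) \<le> (\<Sum>i\<in>F. (cmod (y i))^2)"
    by (rule sum_mono) (auto simp: restr_def)
  also have "\<dots> \<le> (l2norm y)^2" by (rule l2_fin_le[OF assms F])
  finally show "(\<Sum>i\<in>F. (cmod (restr R y i))^2) \<le> (l2norm y)^2" .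
qed simp

definition delta :: "int \<Rightarrow> vec" where "delta p = (\<lambda>i. if i = p then 1 else 0)"

lemma delta_props: "is_l2 (delta p)" "l2norm (delta p) = 1" "supp (delta p) = {p}"
proof -
  have s: "supp (delta p) \<subseteq> {p}" by (auto simp: supp_def delta_def)
  show "is_l2 (delta p)" using l2_finsupp[OF _ s] by simp
  have "(l2norm (delta p))^2 = 1" using l2_finsupp(2)[OF _ s] by (simp add: delta_def)
  then show "l2norm (delta p) = 1" using l2norm_nonneg[of "delta p"] by (simp add: power2_eq_1_iff)
  show "supp (delta p) = {p}" by (auto simp: supp_def delta_def)
qed

lemma l2_tail:
  assumes "is_l2 x" "\<delta> > 0"
  shows "\<exists>n::nat. l2norm (\<lambda>i. x i - restr {- int n .. int n} x i) \<le> \<delta>"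
proof -
  obtain F where F: "finite F" "(l2norm x)^2 - \<delta>^2 \<le> (\<Sum>i\<in>F. (cmod (x i))^2)"
    using l2_approx[OF assms(1), of "\<delta>^2"] assms(2) by auto
  obtain n :: nat where n: "F \<subseteq> {- int n .. int n}"
  proof -
    have "\<forall>i\<in>F. \<bar>i\<bar> \<le> Max (abs ` F)" using F(1) by auto
    then obtain m where "\<forall>i\<in>F. \<bar>i\<bar> \<le> m" by blast
    then show ?thesis by (intro that[of "nat m"]) (force simp: abs_le_iff)
  qed
  let ?W = "{- int n .. int n}"
  have "is_l2 (\<lambda>i. x i - restr ?W x i) \<and> l2norm (\<lambda>i. x i - restr ?W x i) \<le> \<delta>"
  proof (rule l2I')
    fix G :: "int set" assume G: "finite G"
    have eq: "(\<Sum>i\<in>G. (cmod (x i - restr ?W x i))^2) = (\<Sum>i\<in>G - ?W. (cmod (x i))^2)"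
      by (rule sum.mono_neutral_cong_right) (auto simp: restr_def G)
    have "(\<Sum>i\<in>G - ?W. (cmod (x i))^2) + (\<Sum>i\<in>F. (cmod (x i))^2) = (\<Sum>i\<in>(G - ?W) \<union> F. (cmod (x i))^2)"
      using n G F(1) by (intro sum.union_disjoint[symmetric]) auto
    also have "\<dots> \<le> (l2norm x)^2" using l2_fin_le[OF assms(1)] G F(1) by simp
    finally show "(\<Sum>i\<in>G. (cmod (x i - restr ?W x i))^2) \<le> \<delta>^2" using eq F(2) by simp
  qed (use assms in simp)
  then show ?thesis by blast
qed



definition bnd :: "mat \<Rightarrow> nat \<Rightarrow> real \<Rightarrow> bool" where
  "bnd T w C \<longleftrightarrow> (\<forall>i j. nat \<bar>i - j\<bar> > w \<longrightarrow> T i j = 0) \<and> (\<forall>i j. cmod (T i j) \<le> C)"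

lemma bnd_C: "bnd T w C \<Longrightarrow> 0 \<le> C"
  unfolding bnd_def using norm_ge_zero order_trans by blast

lemma bnd_zero: "bnd T w C \<Longrightarrow> nat \<bar>i - j\<bar> > w \<Longrightarrow> T i j = 0"
  unfolding bnd_def by blast

lemma bnd_le: "bnd T w C \<Longrightarrow> cmod (T i j) \<le> C"
  unfolding bnd_def by blast

lemma bnd_adj: "bnd T w C \<Longrightarrow> bnd (adj T) w C"
  unfolding bnd_def adj_def by (auto simp: abs_minus_commute)

lemma mv_fin:
  assumes "finite F" "supp x \<subseteq> F"
  shows "mv T x i = (\<Sum>j\<in>F. T i j * x j)"
  unfolding mv_def using assms by (intro infsum_finsupp(1)) (auto simp: supp_def)

lemma bij_shift_int': "bij_betw (\<lambda>d::int. i + d) UNIV UNIV"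
  by (rule bij_betw_byWitness[where f'="\<lambda>j. j - i"]) auto

lemma mv_band:
  assumes "bnd T w C"
  shows "mv T x i = (\<Sum>d\<in>{- int w .. int w}. T i (i + d) * x (i + d))"
proof -
  have "mv T x i = (\<Sum>\<^sub>\<infinity>d. T i (i + d) * x (i + d))"
    unfolding mv_def using infsum_reindex_bij_betw[OF bij_shift_int'[of i], of "\<lambda>j. T i j * x j"]
    by simp
  also have "\<dots> = (\<Sum>d\<in>{- int w .. int w}. T i (i + d) * x (i + d))"
  proof (rule infsum_finsupp(1))
    fix d assume "d \<notin> {- int w .. int w}"
    then have "nat \<bar>i - (i + d)\<bar> > w" by auto
    then show "T i (i + d) * x (i + d) = 0" using bnd_zero[OF assms] by simp
  qed simp
  finally show ?thesis .
qed

lemma mv_diff: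
  assumes "bnd T w C"
  shows "mv T (\<lambda>i. x i - y i) = (\<lambda>i. mv T x i - mv T y i)"
  by (rule ext) (simp add: mv_band[OF assms] algebra_simps sum_subtractf)

lemma mv_add:
  assumes "bnd T w C"
  shows "mv T (\<lambda>i. x i + y i) = (\<lambda>i. mv T x i + mv T y i)"
  by (rule ext) (simp add: mv_band[OF assms] algebra_simps sum.distrib)

lemma mv_scale:
  assumes "bnd T w C"
  shows "mv T (\<lambda>i. c * x i) = (\<lambda>i. c * mv T x i)"
  by (rule ext) (simp add: mv_band[OF assms] algebra_simps sum_distrib_left)

lemma mv_zero: "mv T (\<lambda>i. 0) = (\<lambda>i. 0)"
  unfolding mv_def by simp

lemma comp_l2:
  assumes "bnd T w C" "is_l2 x"
  shows "is_l2 (\<lambda>i. T i (i + d) * x (i + d)) \<and> l2norm (\<lambda>i. T i (i + d) * x (i + d)) \<le> C * l2norm x"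
proof (rule l2I')
  show "0 \<le> C * l2norm x" using bnd_C[OF assms(1)] by simp
  fix F :: "int set" assume F: "finite F"
  have "(\<Sum>i\<in>F. (cmod (T i (i + d) * x (i + d)))^2) \<le> (\<Sum>i\<in>F. C^2 * (cmod (x (i + d)))^2)"
  proof (rule sum_mono)
    fix i
    have "cmod (T i (i + d)) \<le> C" by (rule bnd_le[OF assms(1)])
    then have "(cmod (T i (i + d)))^2 \<le> C^2" by (intro power_mono) auto
    then show "(cmod (T i (i + d) * x (i + d)))^2 \<le> C^2 * (cmod (x (i + d)))^2"
      by (simp add: norm_mult power_mult_distrib mult_right_mono)
  qed
  also have "\<dots> = C^2 * (\<Sum>i\<in>F. (cmod (x (i + d)))^2)" by (simp add: sum_distrib_left)
  also have "\<dots> \<le> C^2 * (l2norm (\<lambda>i. x (i + d)))^2"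
    using l2_fin_le[of "\<lambda>i. x (i + d)" F] F assms(2) l2_shift[of x d]
    by (intro mult_left_mono) auto
  also have "\<dots> = (C * l2norm x)^2" using l2_shift[of x d] by (simp add: power_mult_distrib)
  finally show "(\<Sum>i\<in>F. (cmod (T i (i + d) * x (i + d)))^2) \<le> (C * l2norm x)^2" .
qed

lemma mv_bounded:
  assumes "bnd T w C" "is_l2 x"
  shows "is_l2 (mv T x) \<and> l2norm (mv T x) \<le> (2 * real w + 1) * C * l2norm x"
proof -
  have e: "mv T x = (\<lambda>i. \<Sum>d\<in>{- int w .. int w}. T i (i + d) * x (i + d))"
    by (rule ext) (rule mv_band[OF assms(1)])
  have c: "real (card {- int w .. int w}) = 2 * real w + 1" by simp
  show ?thesis unfolding e
    using l2_sum[of "{- int w .. int w}" "\<lambda>d i. T i (i + d) * x (i + d)" "C * l2norm x"]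
      comp_l2[OF assms] unfolding c by (simp add: mult.assoc)
qed

lemma Ts_bnd:
  assumes "band_op A w" "T \<in> Ts A"
  shows "\<exists>C. bnd T w C"
proof -
  obtain C where C: "\<forall>i j. cmod (A i j) \<le> C" using assms(1) unfolding band_op_def by blast
  have z: "\<And>i j. nat \<bar>i - j\<bar> > w \<Longrightarrow> A i j = 0" using assms(1) unfolding band_op_def by blast
  obtain z where "T = shiftm A z \<or> T = adj (shiftm A z)" using assms(2) unfolding Ts_def by blast
  moreover have "bnd (shiftm A z) w (C + cmod z)"
    unfolding bnd_def shiftm_def
  proof (intro conjI allI impI)
    fix i j :: int
    show "nat \<bar>i - j\<bar> > w \<Longrightarrow> A i j - (if i = j then z else 0) = 0" using z by auto
    have "cmod (A i j - (if i = j then z else 0)) \<le> cmod (A i j) + cmod (if i = j then z else 0)"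
      by (rule norm_triangle_ineq4)
    also have "\<dots> \<le> C + cmod z" using C by (auto intro: add_mono order_trans[OF _ add_increasing2[OF norm_ge_zero order.refl]])
    finally show "cmod (A i j - (if i = j then z else 0)) \<le> C + cmod z" .
  qed
  ultimately show ?thesis using bnd_adj by blast
qed

lemma adj_adj[simp]: "adj (adj T) = T"
  unfolding adj_def by simp

lemma Ts_adj: "T \<in> Ts A \<Longrightarrow> adj T \<in> Ts A"
  unfolding Ts_def by auto



lemma restr_UNIV[simp]: "restr UNIV y = y"
  unfolding restr_def by simp

lemma restr_id: "supp y \<subseteq> R \<Longrightarrow> restr R y = y"
  unfolding restr_def supp_def by (rule ext) auto

lemma supp_mv_nat:
  assumes "bnd T w C" "supp x \<subseteq> {k + 1 ..}" "k \<ge> int w"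
  shows "supp (mv T x) \<subseteq> natset"
proof
  fix i assume i: "i \<in> supp (mv T x)"
  show "i \<in> natset"
  proof (rule ccontr)
    assume "i \<notin> natset"
    then have "i \<le> 0" unfolding natset_def by auto
    have "mv T x i = 0" unfolding mv_band[OF assms(1)]
    proof (rule sum.neutral, intro ballI)
      fix d assume "d \<in> {- int w .. int w}"
      then have "i + d \<notin> {k + 1 ..}" using \<open>i \<le> 0\<close> assms(3) by auto
      then have "x (i + d) = 0" using assms(2) unfolding supp_def by auto
      then show "T i (i + d) * x (i + d) = 0" by simp
    qed
    then show False using i unfolding supp_def by simp
  qed
qed

lemma lset_bdd: "bdd_below {l2norm (restr R (mv T x)) | x. P x}"
  by (rule bdd_belowI[of _ 0]) auto

lemma delta_in_loc:
  assumes "N \<ge> 1"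
  shows "l2norm (restr R (mv T (delta 1))) \<in> {l2norm (restr R (mv T x)) | x. is_l2 x \<and> supp x \<subseteq> natset \<and> l2norm x = 1
      \<and> (\<exists>k. supp x \<subseteq> {k + 1 .. k + int N})}"
  using delta_props[of 1] assms unfolding natset_def
  by (intro CollectI exI[of _ "delta 1"]) (auto intro!: exI[of _ 0])

lemma part1:
  assumes "bnd T w C" "N \<ge> 1"
  shows "lnu_loc N T natset natset =
             Min ({lnu_loc N T natset UNIV} \<union>
                  {lnu_set {int j .. int j + int N - 1} T natset | j. j \<in> {1..w}})"
proof -
  define SL where "SL = {l2norm (restr natset (mv T x)) | x. is_l2 x \<and> supp x \<subseteq> natset \<and> l2norm x = 1
      \<and> (\<exists>k. supp x \<subseteq> {k + 1 .. k + int N})}"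
  define SU where "SU = {l2norm (restr UNIV (mv T x)) | x. is_l2 x \<and> supp x \<subseteq> natset \<and> l2norm x = 1
      \<and> (\<exists>k. supp x \<subseteq> {k + 1 .. k + int N})}"
  define SJ where "SJ j = {l2norm (restr natset (mv T x)) | x. is_l2 x \<and> supp x \<subseteq> {int j .. int j + int N - 1} \<and> l2norm x = 1}" for j :: nat
  define Q where "Q = {lnu_loc N T natset UNIV} \<union> {lnu_set {int j .. int j + int N - 1} T natset | j. j \<in> {1..w}}"
  have L: "lnu_loc N T natset natset = Inf SL" unfolding SL_def lnu_loc_def ..
  have U: "lnu_loc N T natset UNIV = Inf SU" unfolding SU_def lnu_loc_def ..
  have J: "lnu_set {int j .. int j + int N - 1} T natset = Inf (SJ j)" for j
    unfolding SJ_def lnu_set_def ..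
  have Qfin: "finite Q" unfolding Q_def
  proof -
    have "{lnu_set {int j .. int j + int N - 1} T natset | j. j \<in> {1..w}}
        = (\<lambda>j. lnu_set {int j .. int j + int N - 1} T natset) ` {1..w}" by auto
    then show "finite ({lnu_loc N T natset UNIV} \<union> {lnu_set {int j .. int j + int N - 1} T natset | j. j \<in> {1..w}})"
      by simp
  qed
  have Qne: "Q \<noteq> {}" unfolding Q_def by simp
  have SLne: "SL \<noteq> {}" using delta_in_loc[OF assms(2), of natset T] unfolding SL_def by (metis empty_iff)
  have SUne: "SU \<noteq> {}" using delta_in_loc[OF assms(2), of UNIV T] unfolding SU_def by (metis empty_iff)
  have SLb: "bdd_below SL" unfolding SL_def by (rule lset_bdd)
  have SUb: "bdd_below SU" unfolding SU_def by (rule lset_bdd)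
  have SJb: "bdd_below (SJ j)" for j unfolding SJ_def by (rule lset_bdd)
  have LU: "Inf SL \<le> Inf SU"
  proof (rule cInf_mono[OF SUne SLb])
    fix b assume "b \<in> SU"
    then obtain x where x: "b = l2norm (mv T x)" "is_l2 x" "supp x \<subseteq> natset" "l2norm x = 1"
      "\<exists>k. supp x \<subseteq> {k + 1 .. k + int N}" unfolding SU_def by auto
    have "l2norm (restr natset (mv T x)) \<le> b"
      using l2_restr[OF conjunct1[OF mv_bounded[OF assms(1) x(2)]], of natset] x(1) by simp
    moreover have "l2norm (restr natset (mv T x)) \<in> SL" unfolding SL_def
      by (rule CollectI, rule exI[of _ x]) (use x in auto)
    ultimately show "\<exists>a\<in>SL. a \<le> b" by (rule bexI)
  qed
  have LJ: "Inf SL \<le> Inf (SJ j)" if j: "j \<in> {1..w}" for j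
  proof (rule cInf_superset_mono[OF _ SLb])
    have "is_l2 (delta (int j)) \<and> supp (delta (int j)) \<subseteq> {int j .. int j + int N - 1} \<and> l2norm (delta (int j)) = 1"
      using delta_props[of "int j"] assms(2) by auto
    then have "l2norm (restr natset (mv T (delta (int j)))) \<in> SJ j" unfolding SJ_def
      by (intro CollectI exI[of _ "delta (int j)"]) auto
    then show "SJ j \<noteq> {}" by blast
    show "SJ j \<subseteq> SL"
    proof
      fix e assume "e \<in> SJ j"
      then obtain x where x: "e = l2norm (restr natset (mv T x))" "is_l2 x" "supp x \<subseteq> {int j .. int j + int N - 1}"
        "l2norm x = 1" unfolding SJ_def by auto
      have "supp x \<subseteq> natset" using x(3) j unfolding natset_def by auto
      moreover have "\<exists>k. supp x \<subseteq> {k + 1 .. k + int N}"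
        using x(3) by (intro exI[of _ "int j - 1"]) auto
      ultimately show "e \<in> SL" unfolding SL_def
        by (intro CollectI exI[of _ x]) (use x in blast)
    qed
  qed
  have geq: "Min Q \<le> Inf SL"
  proof (rule cInf_greatest[OF SLne])
    fix e assume "e \<in> SL"
    then obtain x k where x: "e = l2norm (restr natset (mv T x))" "is_l2 x" "supp x \<subseteq> natset" "l2norm x = 1"
      "supp x \<subseteq> {k + 1 .. k + int N}" unfolding SL_def by auto
    define k0 where "k0 = max k 0"
    have sk0: "supp x \<subseteq> {k0 + 1 .. k0 + int N}" using x(3,5) assms(2) unfolding k0_def natset_def by (force simp: subset_iff)
    show "Min Q \<le> e"
    proof (cases "k0 < int w")
      case True
      define j where "j = nat k0 + 1"
      have j: "j \<in> {1..w}" using True unfolding j_def k0_def by auto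
      have "supp x \<subseteq> {int j .. int j + int N - 1}" using sk0 unfolding j_def k0_def by auto
      then have "e \<in> SJ j" unfolding SJ_def
        by (intro CollectI exI[of _ x]) (use x in auto)
      then have "Inf (SJ j) \<le> e" using SJb by (rule cInf_lower)
      moreover have "Inf (SJ j) \<in> Q" unfolding Q_def J[symmetric]
        by (intro UnI2 CollectI exI[of _ j]) (use j in simp)
      ultimately show ?thesis using Min_le[OF Qfin] order_trans by metis
    next
      case False
      have "supp x \<subseteq> {k0 + 1 ..}" using sk0 by auto
      then have "supp (mv T x) \<subseteq> natset" using supp_mv_nat[OF assms(1)] False by simp
      then have "restr natset (mv T x) = restr UNIV (mv T x)" by (simp add: restr_id)
      then have "e \<in> SU" unfolding SU_def
        by (intro CollectI exI[of _ x]) (use x in auto)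
      then have "Inf SU \<le> e" using SUb by (rule cInf_lower)
      moreover have "Inf SU \<in> Q" unfolding Q_def U by simp
      ultimately show ?thesis using Min_le[OF Qfin] order_trans by metis
    qed
  qed
  have leq: "Inf SL \<le> Min Q"
  proof -
    have "\<forall>q\<in>Q. Inf SL \<le> q" unfolding Q_def U using LU LJ J by auto
    then show ?thesis using Qfin Qne by simp
  qed
  show ?thesis unfolding L Q_def[symmetric] using geq leq by linarith
qed



definition subm :: "mat \<Rightarrow> nat \<Rightarrow> nat \<Rightarrow> int \<Rightarrow> mat" where
  "subm A w N k = (\<lambda>i j. if i \<in> {1 - int w .. int N + int w} \<and> j \<in> {1 .. int N} then A (k + i) (k + j) else 0)"

lemma csubs_eq: "csubs B J w = {(N, subm B w N k) | N k. N \<ge> 1 \<and> {k + 1 .. k + int N} \<subseteq> J}"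
  unfolding csubs_def subm_def ..

lemma csubs_match:
  assumes "csubs A UNIV w = csubs A natset w" "N \<ge> 1"
  shows "\<exists>s. k + s \<ge> int w \<and> (\<forall>p q. p \<in> {k + 1 - int w .. k + int N + int w} \<longrightarrow>
            q \<in> {k + 1 - int w .. k + int N + int w} \<longrightarrow> A (p + s) (q + s) = A p q)"
proof -
  define N2 where "N2 = N + 2 * w"
  define k2 where "k2 = k - int w"
  have "(N2, subm A w N2 k2) \<in> csubs A UNIV w"
    unfolding csubs_eq using assms(2) unfolding N2_def by (intro CollectI exI[of _ N2] exI[of _ k2] conjI) (auto simp: N2_def)
  then have "(N2, subm A w N2 k2) \<in> csubs A natset w" using assms(1) by simp
  then obtain N' k'' where k''0: "(N2, subm A w N2 k2) = (N', subm A w N' k'')" "{k'' + 1 .. k'' + int N'} \<subseteq> natset"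
    unfolding csubs_eq by blast
  then have k'': "subm A w N2 k2 = subm A w N2 k''" "{k'' + 1 .. k'' + int N2} \<subseteq> natset"
    by auto
  have "k'' + 1 \<in> {k'' + 1 .. k'' + int N2}" using assms(2) unfolding N2_def by auto
  then have k0: "k'' \<ge> 0" using k''(2) unfolding natset_def by auto
  define s where "s = k'' - k2"
  show ?thesis
  proof (intro exI[of _ s] conjI allI impI)
    show "k + s \<ge> int w" using k0 unfolding s_def k2_def by simp
    fix p q assume p: "p \<in> {k + 1 - int w .. k + int N + int w}" and q: "q \<in> {k + 1 - int w .. k + int N + int w}"
    have "subm A w N2 k2 (p - k2) (q - k2) = subm A w N2 k'' (p - k2) (q - k2)" using k''(1) by simp
    moreover have "p - k2 \<in> {1 - int w .. int N2 + int w} \<and> q - k2 \<in> {1 .. int N2}"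
      using p q unfolding k2_def N2_def by auto
    ultimately have "A (k2 + (p - k2)) (k2 + (q - k2)) = A (k'' + (p - k2)) (k'' + (q - k2))"
      unfolding subm_def by simp
    then show "A (p + s) (q + s) = A p q" unfolding s_def by (simp add: algebra_simps)
  qed
qed

lemma Ts_match:
  assumes "T \<in> Ts A" "\<forall>p q. p \<in> W \<longrightarrow> q \<in> W \<longrightarrow> A (p + s) (q + s) = A p q"
    "p \<in> W" "q \<in> W"
  shows "T (p + s) (q + s) = T p q"
proof -
  obtain z where "T = shiftm A z \<or> T = adj (shiftm A z)" using assms(1) unfolding Ts_def by blast
  then show ?thesis using assms(2-4) unfolding shiftm_def adj_def by auto
qed

lemma shift_lemma:
  assumes "band_op A w" "csubs A UNIV w = csubs A natset w" "T \<in> Ts A" "N \<ge> 1"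
    "supp x \<subseteq> {k + 1 .. k + int N}"
  shows "\<exists>s. k + s \<ge> int w \<and> supp (\<lambda>i. x (i - s)) \<subseteq> {k + s + 1 .. k + s + int N}
     \<and> mv T (\<lambda>i. x (i - s)) = (\<lambda>i. mv T x (i - s))"
proof -
  obtain C where C: "bnd T w C" using Ts_bnd[OF assms(1,3)] by blast
  obtain s where s: "k + s \<ge> int w" "\<forall>p q. p \<in> {k + 1 - int w .. k + int N + int w} \<longrightarrow>
            q \<in> {k + 1 - int w .. k + int N + int w} \<longrightarrow> A (p + s) (q + s) = A p q"
    using csubs_match[OF assms(2,4)] by blast
  let ?W = "{k + 1 - int w .. k + int N + int w}"
  let ?F = "{k + 1 .. k + int N}"
  have sx': "supp (\<lambda>i. x (i - s)) \<subseteq> {k + s + 1 .. k + s + int N}"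
    using assms(5) unfolding supp_def by force
  have mvi: "mv T (\<lambda>i. x (i - s)) i = mv T x (i - s)" for i
  proof -
    have "mv T (\<lambda>i. x (i - s)) i = (\<Sum>j\<in>{k + s + 1 .. k + s + int N}. T i j * x (j - s))"
      by (rule mv_fin[OF _ sx']) simp
    also have "\<dots> = (\<Sum>j\<in>?F. T i (j + s) * x j)"
      by (rule sum.reindex_bij_witness[where i="\<lambda>j. j + s" and j="\<lambda>j. j - s"]) auto
    also have "\<dots> = (\<Sum>j\<in>?F. T (i - s) j * x j)"
    proof (rule sum.cong[OF refl])
      fix j assume j: "j \<in> ?F"
      show "T i (j + s) * x j = T (i - s) j * x j"
      proof (cases "i - s \<in> ?W")
        case True
        have "T (i - s + s) (j + s) = T (i - s) j"
          by (rule Ts_match[OF assms(3) s(2) True]) (use j in auto)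
        then show ?thesis by simp
      next
        case False
        then have "nat \<bar>(i - s) - j\<bar> > w" using j by auto
        moreover have "nat \<bar>i - (j + s)\<bar> = nat \<bar>(i - s) - j\<bar>" by (simp add: algebra_simps)
        ultimately show ?thesis using bnd_zero[OF C] by (metis mult_zero_left)
      qed
    qed
    also have "\<dots> = mv T x (i - s)" by (rule mv_fin[symmetric, OF _ assms(5)]) simp
    finally show ?thesis .
  qed
  show ?thesis by (intro exI[of _ s] conjI ext s(1) sx' mvi)
qed

lemma part2a:
  assumes "band_op A w" "csubs A UNIV w = csubs A natset w" "T \<in> Ts A" "N \<ge> 1"
  shows "lnu_loc N T natset UNIV = lnu_loc N T UNIV UNIV"
proof -
  obtain C where C: "bnd T w C" using Ts_bnd[OF assms(1,3)] by blast
  define SN where "SN = {l2norm (restr UNIV (mv T x)) | x. is_l2 x \<and> supp x \<subseteq> natset \<and> l2norm x = 1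
      \<and> (\<exists>k. supp x \<subseteq> {k + 1 .. k + int N})}"
  define SU where "SU = {l2norm (restr UNIV (mv T x)) | x. is_l2 x \<and> supp x \<subseteq> UNIV \<and> l2norm x = 1
      \<and> (\<exists>k. supp x \<subseteq> {k + 1 .. k + int N})}"
  have SNne: "SN \<noteq> {}" using delta_in_loc[OF assms(4), of UNIV T] unfolding SN_def by (metis empty_iff)
  have sub: "SN \<subseteq> SU" unfolding SN_def SU_def by auto
  have SNb: "bdd_below SN" unfolding SN_def by (rule lset_bdd)
  have SUb: "bdd_below SU" unfolding SU_def by (rule lset_bdd)
  have "Inf SU \<le> Inf SN" by (rule cInf_superset_mono[OF SNne SUb sub])
  moreover have "Inf SN \<le> Inf SU"
  proof (rule cInf_mono[OF _ SNb])
    show "SU \<noteq> {}" using SNne sub by blast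
    fix b assume "b \<in> SU"
    then obtain x k where x: "b = l2norm (mv T x)" "is_l2 x" "l2norm x = 1"
      "supp x \<subseteq> {k + 1 .. k + int N}" unfolding SU_def by auto
    obtain s where s: "k + s \<ge> int w" "supp (\<lambda>i. x (i - s)) \<subseteq> {k + s + 1 .. k + s + int N}"
      "mv T (\<lambda>i. x (i - s)) = (\<lambda>i. mv T x (i - s))"
      using shift_lemma[OF assms(1-4) x(4)] by blast
    let ?x = "\<lambda>i. x (i - s)"
    have sh: "is_l2 ?x = is_l2 x" "l2norm ?x = l2norm x"
      using l2_shift[of x "- s"] by simp_all
    have "l2norm (mv T ?x) = b" unfolding s(3) x(1) using l2_shift[of "mv T x" "- s"] by simp
    moreover have "l2norm (restr UNIV (mv T ?x)) \<in> SN" unfolding SN_def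
    proof (intro CollectI exI[of _ ?x] conjI)
      show "supp ?x \<subseteq> natset" using s(1,2) assms(1) unfolding natset_def by force
      show "\<exists>k. supp ?x \<subseteq> {k + 1 .. k + int N}" using s(2) by blast
    qed (use sh x in auto)
    ultimately show "\<exists>a\<in>SN. a \<le> b" by force
  qed
  ultimately show ?thesis unfolding lnu_loc_def SN_def SU_def by simp
qed



lemma restr_scale: "restr R (\<lambda>i. c * y i) = (\<lambda>i. c * restr R y i)"
  unfolding restr_def by auto

lemma supp_scale: "supp (\<lambda>i. c * x i) \<subseteq> supp x"
  unfolding supp_def by auto

lemma lnu_set_le:
  assumes "bnd T w C" "is_l2 x" "supp x \<subseteq> S"
  shows "lnu_set S T R * l2norm x \<le> l2norm (restr R (mv T x))"
proof (cases "l2norm x = 0")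
  case True then show ?thesis by simp
next
  case False
  then have pos: "l2norm x > 0" using l2norm_nonneg[of x] by linarith
  define c where "c = complex_of_real (1 / l2norm x)"
  define y where "y = (\<lambda>i. c * x i)"
  have cm: "cmod c = 1 / l2norm x" unfolding c_def norm_of_real using pos by simp
  have y: "is_l2 y" "l2norm y = 1" unfolding y_def using l2_scale[OF assms(2), of c] cm pos by auto
  have sy: "supp y \<subseteq> S" unfolding y_def using supp_scale assms(3) by blast
  have Ty: "restr R (mv T y) = (\<lambda>i. c * restr R (mv T x) i)"
    unfolding y_def mv_scale[OF assms(1)] restr_scale ..
  have l2T: "is_l2 (restr R (mv T x))" using l2_restr mv_bounded[OF assms(1,2)] by blast
  have "lnu_set S T R \<le> l2norm (restr R (mv T y))"
    unfolding lnu_set_def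
    by (rule cInf_lower) (use y sy in \<open>auto intro!: lset_bdd\<close>)
  also have "\<dots> = l2norm (restr R (mv T x)) / l2norm x"
    unfolding Ty using l2_scale[OF l2T, of c] cm by simp
  finally show ?thesis using pos by (simp add: pos_le_divide_eq)
qed

lemma fin_bound:
  assumes "band_op A w" "csubs A UNIV w = csubs A natset w" "T \<in> Ts A" "N \<ge> 1"
    "supp x \<subseteq> {k + 1 .. k + int N}"
  shows "lnu_set natset T natset * l2norm x \<le> l2norm (mv T x)"
proof -
  obtain C where C: "bnd T w C" using Ts_bnd[OF assms(1,3)] by blast
  obtain s where s: "k + s \<ge> int w" "supp (\<lambda>i. x (i - s)) \<subseteq> {k + s + 1 .. k + s + int N}"
      "mv T (\<lambda>i. x (i - s)) = (\<lambda>i. mv T x (i - s))"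
    using shift_lemma[OF assms] by blast
  let ?x = "\<lambda>i. x (i - s)"
  have x: "is_l2 x" using l2_finsupp(1)[OF _ assms(5)] by simp
  have sh: "is_l2 ?x" "l2norm ?x = l2norm x"
    using l2_shift[of x "- s"] x by simp_all
  have sn: "supp ?x \<subseteq> natset" using s(1,2) unfolding natset_def by force
  have "supp ?x \<subseteq> {k + s + 1 ..}" using s(2) by auto
  then have "supp (mv T ?x) \<subseteq> natset" using supp_mv_nat[OF C] s(1) by blast
  then have r: "restr natset (mv T ?x) = mv T ?x" by (rule restr_id)
  have "lnu_set natset T natset * l2norm x = lnu_set natset T natset * l2norm ?x" using sh by simp
  also have "\<dots> \<le> l2norm (restr natset (mv T ?x))" by (rule lnu_set_le[OF C sh(1) sn])
  also have "\<dots> = l2norm (mv T ?x)" using r by simp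
  also have "\<dots> = l2norm (mv T x)" unfolding s(3) using l2_shift[of "mv T x" "- s"] by simp
  finally show ?thesis .
qed

lemma eps_lemma:
  fixes a b M :: real
  assumes "\<And>\<delta>. 0 < \<delta> \<Longrightarrow> \<delta> < 1 \<Longrightarrow> a * (1 - \<delta>) \<le> b + M * \<delta>"
  shows "a \<le> b"
proof (rule ccontr)
  assume "\<not> a \<le> b"
  then have e: "a - b > 0" by simp
  define \<delta> where "\<delta> = min (1/2) ((a - b) / (2 * (\<bar>a\<bar> + \<bar>M\<bar> + 1)))"
  have d0: "0 < \<delta>" "\<delta> < 1" unfolding \<delta>_def using e by (auto simp: min_def)
  have "\<delta> * (\<bar>a\<bar> + \<bar>M\<bar> + 1) \<le> (a - b) / (2 * (\<bar>a\<bar> + \<bar>M\<bar> + 1)) * (\<bar>a\<bar> + \<bar>M\<bar> + 1)"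
    unfolding \<delta>_def by (intro mult_right_mono) auto
  also have "\<dots> = (a - b) / 2" by (simp add: field_simps)
  finally have d1: "\<delta> * (\<bar>a\<bar> + \<bar>M\<bar> + 1) \<le> (a - b) / 2" .
  have "a - b \<le> \<delta> * (a + M)" using assms[OF d0] by (simp add: algebra_simps)
  also have "\<dots> \<le> \<delta> * (\<bar>a\<bar> + \<bar>M\<bar> + 1)" using d0 by (intro mult_left_mono) auto
  finally have "a - b \<le> (a - b) / 2" using d1 by (rule order_trans)
  then show False using e by (simp add: field_simps)
qed

lemma part3:
  assumes "band_op A w" "csubs A UNIV w = csubs A natset w" "T \<in> Ts A"
  shows "lnu_set natset T natset \<le> lnu_set UNIV T UNIV"
proof -
  obtain C where C: "bnd T w C" using Ts_bnd[OF assms(1,3)] by blast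
  define M where "M = (2 * real w + 1) * C"
  have M0: "M \<ge> 0" unfolding M_def using bnd_C[OF C] by simp
  let ?nu = "lnu_set natset T natset"
  have key: "?nu \<le> l2norm (mv T x)" if x: "is_l2 x" "l2norm x = 1" for x
  proof (rule eps_lemma[where M = M])
    fix \<delta> :: real assume d: "0 < \<delta>" "\<delta> < 1"
    obtain n where n: "l2norm (\<lambda>i. x i - restr {- int n .. int n} x i) \<le> \<delta>"
      using l2_tail[OF x(1) d(1)] by blast
    define xn where "xn = restr {- int n .. int n} x"
    define e where "e = (\<lambda>i. x i - xn i)"
    have e: "is_l2 e" "l2norm e \<le> \<delta>" unfolding e_def xn_def
      using n l2_restr[OF x(1)] l2_diff[OF x(1)] by blast+
    have sxn: "supp xn \<subseteq> {(- int n - 1) + 1 .. (- int n - 1) + int (2 * n + 1)}"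
      unfolding xn_def supp_def restr_def by auto
    have xn: "is_l2 xn" using l2_finsupp(1)[OF _ sxn] by simp
    have xe: "xn = (\<lambda>i. x i - e i)" unfolding e_def by simp
    have "1 = l2norm (\<lambda>i. xn i + e i)" unfolding e_def using x(2) by simp
    also have "\<dots> \<le> l2norm xn + l2norm e" using l2_add[OF xn e(1)] by blast
    finally have xn1: "1 - \<delta> \<le> l2norm xn" using e(2) by linarith
    have nu0: "?nu \<ge> 0" unfolding lnu_set_def
      by (rule cInf_greatest) (use delta_props[of 1] in \<open>auto simp: natset_def intro!: exI[of _ "delta 1"]\<close>)
    have "?nu * (1 - \<delta>) \<le> ?nu * l2norm xn" using xn1 nu0 by (rule mult_left_mono)
    also have "\<dots> \<le> l2norm (mv T xn)"
      by (rule fin_bound[OF assms(1,2,3) _ sxn]) simp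
    also have "mv T xn = (\<lambda>i. mv T x i - mv T e i)" unfolding xe by (rule mv_diff[OF C])
    also have "l2norm \<dots> \<le> l2norm (mv T x) + l2norm (mv T e)"
      using l2_diff mv_bounded[OF C x(1)] mv_bounded[OF C e(1)] by blast
    also have "l2norm (mv T e) \<le> M * \<delta>"
      using mv_bounded[OF C e(1)] e(2) M0 unfolding M_def
      by (meson mult_left_mono order_trans)
    finally show "?nu * (1 - \<delta>) \<le> l2norm (mv T x) + M * \<delta>" by simp
  qed
  show ?thesis unfolding lnu_set_def[of UNIV]
  proof (rule cInf_greatest)
    show "{l2norm (restr UNIV (mv T x)) |x. is_l2 x \<and> supp x \<subseteq> UNIV \<and> l2norm x = 1} \<noteq> {}"
      using delta_props[of 1] by auto
  qed (use key in auto)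
qed



definition l2d :: "vec \<Rightarrow> vec \<Rightarrow> real" where
  "l2d x y = l2norm (\<lambda>i. x i - y i)"

lemma l2_zero_vec: "is_l2 (\<lambda>i. 0) \<and> l2norm (\<lambda>i::int. 0::complex) \<le> 0"
  by (rule l2I') auto

lemma l2_metric: "Metric_space (L2on S) l2d"
proof
  fix x y z
  show "0 \<le> l2d x y" unfolding l2d_def by simp
  show "l2d x y = l2d y x" unfolding l2d_def by (rule l2_diff_comm)
  assume x: "x \<in> L2on S" and y: "y \<in> L2on S"
  have lx: "is_l2 x" and ly: "is_l2 y" using x y unfolding L2on_def by auto
  have lxy: "is_l2 (\<lambda>i. x i - y i)" using l2_diff[OF lx ly] by blast
  show "l2d x y = 0 \<longleftrightarrow> x = y"
  proof
    assume "l2d x y = 0"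
    then have "x i - y i = 0" for i using l2_zero[OF lxy] unfolding l2d_def by blast
    then show "x = y" by auto
  next
    assume "x = y" then show "l2d x y = 0" unfolding l2d_def using l2_zero_vec
      by (simp add: order_antisym)
  qed
  assume z: "z \<in> L2on S"
  then have lz: "is_l2 z" unfolding L2on_def by auto
  show "l2d x z \<le> l2d x y + l2d y z" unfolding l2d_def by (rule l2_dist_tri[OF lx ly lz])
qed

lemma l2_fatou:
  assumes lim: "\<And>i. (\<lambda>k. z k i) \<longlonglongrightarrow> zl i" and b: "\<And>k. k \<ge> K \<Longrightarrow> is_l2 (z k) \<and> l2norm (z k) \<le> B"
    and B: "0 \<le> B"
  shows "is_l2 zl \<and> l2norm zl \<le> B"
proof (rule l2I'[OF B])
  fix F :: "int set" assume F: "finite F"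
  have "(\<lambda>k. \<Sum>i\<in>F. (cmod (z k i))^2) \<longlonglongrightarrow> (\<Sum>i\<in>F. (cmod (zl i))^2)"
    by (intro tendsto_sum tendsto_power tendsto_norm lim)
  moreover have "\<exists>N. \<forall>k\<ge>N. (\<Sum>i\<in>F. (cmod (z k i))^2) \<le> B^2"
  proof (intro exI allI impI)
    fix k assume "K \<le> k"
    then have "is_l2 (z k)" "l2norm (z k) \<le> B" using b by auto
    then show "(\<Sum>i\<in>F. (cmod (z k i))^2) \<le> B^2"
      using l2_fin_le[OF _ F, of "z k"] power_mono[of "l2norm (z k)" B 2] by auto
  qed
  ultimately show "(\<Sum>i\<in>F. (cmod (zl i))^2) \<le> B^2" by (rule LIMSEQ_le_const2)
qed

lemma l2_complete: "Metric_space.mcomplete (L2on S) l2d"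
proof -
  interpret M: Metric_space "L2on S" l2d by (rule l2_metric)
  show ?thesis unfolding M.mcomplete_def
  proof (intro allI impI)
    fix \<sigma> assume c: "M.MCauchy \<sigma>"
    then have rs: "\<And>n. \<sigma> n \<in> L2on S" and cau: "\<And>e. e > 0 \<Longrightarrow> \<exists>N. \<forall>n n'. N \<le> n \<longrightarrow> N \<le> n' \<longrightarrow> l2d (\<sigma> n) (\<sigma> n') < e"
      unfolding M.MCauchy_def by auto
    have l2s: "is_l2 (\<sigma> n)" for n using rs[of n] unfolding L2on_def by auto
    have coord: "cmod (\<sigma> n i - \<sigma> m i) \<le> l2d (\<sigma> n) (\<sigma> m)" for n m i
      unfolding l2d_def using l2_coord l2_diff[OF l2s l2s] by blast
    have conv: "convergent (\<lambda>n. \<sigma> n i)" for i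
    proof -
      have "Cauchy (\<lambda>n. \<sigma> n i)"
      proof (rule CauchyI)
        fix e :: real assume "e > 0"
        then obtain N where N: "\<forall>n n'. N \<le> n \<longrightarrow> N \<le> n' \<longrightarrow> l2d (\<sigma> n) (\<sigma> n') < e" using cau by blast
        show "\<exists>M. \<forall>m\<ge>M. \<forall>n\<ge>M. cmod (\<sigma> m i - \<sigma> n i) < e"
          using N coord le_less_trans by blast
      qed
      then show ?thesis by (simp add: Cauchy_convergent_iff)
    qed
    define x where "x i = lim (\<lambda>n. \<sigma> n i)" for i
    have lim: "(\<lambda>n. \<sigma> n i) \<longlonglongrightarrow> x i" for i unfolding x_def using conv convergent_LIMSEQ_iff by blast
    have near: "\<exists>N. \<forall>n\<ge>N. is_l2 (\<lambda>i. \<sigma> n i - x i) \<and> l2norm (\<lambda>i. \<sigma> n i - x i) \<le> e" if e: "e > 0" for e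
    proof -
      obtain N where N: "\<forall>n n'. N \<le> n \<longrightarrow> N \<le> n' \<longrightarrow> l2d (\<sigma> n) (\<sigma> n') < e" using cau e by blast
      show ?thesis
      proof (intro exI allI impI)
        fix n assume n: "N \<le> n"
        show "is_l2 (\<lambda>i. \<sigma> n i - x i) \<and> l2norm (\<lambda>i. \<sigma> n i - x i) \<le> e"
        proof (rule l2_fatou[where z = "\<lambda>k i. \<sigma> n i - \<sigma> k i" and K = N])
          show "(\<lambda>k. \<sigma> n i - \<sigma> k i) \<longlonglongrightarrow> \<sigma> n i - x i" for i by (intro tendsto_intros lim)
          fix k assume "N \<le> k"
          then show "is_l2 (\<lambda>i. \<sigma> n i - \<sigma> k i) \<and> l2norm (\<lambda>i. \<sigma> n i - \<sigma> k i) \<le> e"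
            using N n l2_diff[OF l2s l2s, of n k] unfolding l2d_def by force
        qed (use e in simp)
      qed
    qed
    obtain N1 where N1: "\<forall>n\<ge>N1. is_l2 (\<lambda>i. \<sigma> n i - x i) \<and> l2norm (\<lambda>i. \<sigma> n i - x i) \<le> 1"
      using near[of 1] by auto
    have "is_l2 (\<lambda>i. \<sigma> N1 i - (\<sigma> N1 i - x i))" using l2_diff[OF l2s[of N1], of "\<lambda>i. \<sigma> N1 i - x i"] N1 by blast
    then have lx: "is_l2 x" by simp
    have sx: "supp x \<subseteq> S"
    proof
      fix i assume "i \<in> supp x"
      show "i \<in> S"
      proof (rule ccontr)
        assume "i \<notin> S"
        then have "\<sigma> n i = 0" for n using rs[of n] unfolding L2on_def supp_def by auto
        then have "x i = 0" using lim[of i] LIMSEQ_unique[OF _ tendsto_const] by fastforce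
        then show False using \<open>i \<in> supp x\<close> unfolding supp_def by auto
      qed
    qed
    have "x \<in> L2on S" using lx sx unfolding L2on_def by auto
    moreover have "\<forall>e>0. eventually (\<lambda>n. \<sigma> n \<in> L2on S \<and> l2d (\<sigma> n) x < e) sequentially"
    proof (intro allI impI)
      fix e :: real assume e: "e > 0"
      obtain N where N: "\<forall>n\<ge>N. is_l2 (\<lambda>i. \<sigma> n i - x i) \<and> l2norm (\<lambda>i. \<sigma> n i - x i) \<le> e / 2"
        using near[of "e/2"] e by auto
      show "eventually (\<lambda>n. \<sigma> n \<in> L2on S \<and> l2d (\<sigma> n) x < e) sequentially"
        unfolding eventually_sequentially using N rs e unfolding l2d_def by force
    qed
    ultimately show "\<exists>x. limitin M.mtopology \<sigma> x sequentially" unfolding M.limitin_metric by blast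
  qed
qed

definition ip :: "vec \<Rightarrow> vec \<Rightarrow> complex" where
  "ip u v = (\<Sum>\<^sub>\<infinity>i. u i * cnj (v i))"

lemma ip_abs:
  assumes "is_l2 u" "is_l2 v"
  shows "(\<lambda>i. norm (u i * cnj (v i))) summable_on UNIV"
    "(\<Sum>\<^sub>\<infinity>i. norm (u i * cnj (v i))) \<le> l2norm u * l2norm v"
proof -
  have fb: "(\<Sum>i\<in>F. norm (u i * cnj (v i))) \<le> l2norm u * l2norm v" if F: "finite F" for F
  proof -
    have "(\<Sum>i\<in>F. norm (u i * cnj (v i))) = (\<Sum>i\<in>F. \<bar>cmod (u i)\<bar> * \<bar>cmod (v i)\<bar>)"
      by (simp add: norm_mult)
    also have "\<dots> \<le> L2_set (\<lambda>i. cmod (u i)) F * L2_set (\<lambda>i. cmod (v i)) F"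
      by (rule L2_set_mult_ineq)
    also have "\<dots> \<le> l2norm u * l2norm v"
      using L2_le[OF assms(1) F] L2_le[OF assms(2) F] by (intro mult_mono) (auto simp: L2_set_def sum_nonneg)
    finally show ?thesis .
  qed
  show s: "(\<lambda>i. norm (u i * cnj (v i))) summable_on UNIV"
    by (rule nonneg_bdd_above_summable_on) (use fb in \<open>auto intro!: bdd_aboveI2\<close>)
  show "(\<Sum>\<^sub>\<infinity>i. norm (u i * cnj (v i))) \<le> l2norm u * l2norm v"
    using s fb by (intro infsum_le_finite_sums) auto
qed

lemma ip_summable:
  assumes "is_l2 u" "is_l2 v"
  shows "(\<lambda>i. u i * cnj (v i)) summable_on UNIV"
  by (rule abs_summable_summable[OF ip_abs(1)[OF assms]])

lemma ip_CS:
  assumes "is_l2 u" "is_l2 v"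
  shows "cmod (ip u v) \<le> l2norm u * l2norm v"
  unfolding ip_def using norm_infsum_bound[OF ip_abs(1)[OF assms]] ip_abs(2)[OF assms] by linarith

lemma ip_Re_self:
  assumes "is_l2 u"
  shows "Re (ip u u) = (l2norm u)^2"
proof -
  have "Re (ip u u) = (\<Sum>\<^sub>\<infinity>i. Re (u i * cnj (u i)))"
    unfolding ip_def using infsum_Re[OF ip_summable[OF assms assms]] by simp
  also have "\<dots> = (\<Sum>\<^sub>\<infinity>i. (cmod (u i))^2)"
    by (rule infsum_cong) (unfold cmod_power2, simp add: power2_eq_square)
  finally show ?thesis unfolding l2norm_sq .
qed

lemma ip_expand:
  assumes a: "is_l2 a" and b: "is_l2 b"
  shows "(l2d a b)^2 = (l2norm a)^2 - 2 * Re (ip b a) + (l2norm b)^2"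
proof -
  have ha: "((\<lambda>i. (cmod (a i))^2) has_sum (l2norm a)^2) UNIV"
    using a unfolding is_l2_def l2norm_sq by (simp add: summable_iff_has_sum_infsum[symmetric])
  have hb: "((\<lambda>i. (cmod (b i))^2) has_sum (l2norm b)^2) UNIV"
    using b unfolding is_l2_def l2norm_sq by (simp add: summable_iff_has_sum_infsum[symmetric])
  have hab: "((\<lambda>i. Re (b i * cnj (a i))) has_sum Re (ip b a)) UNIV"
    unfolding ip_def by (rule has_sum_Re) (use ip_summable[OF b a] in \<open>simp add: summable_iff_has_sum_infsum[symmetric]\<close>)
  have "((\<lambda>i. (cmod (a i))^2 + (-2) * Re (b i * cnj (a i)) + (cmod (b i))^2) has_sum
      ((l2norm a)^2 + (-2) * Re (ip b a) + (l2norm b)^2)) UNIV"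
    by (intro has_sum_add has_sum_cmult_right ha hb hab)
  moreover have "(cmod (a i))^2 + (-2) * Re (b i * cnj (a i)) + (cmod (b i))^2 = (cmod (a i - b i))^2" for i
    unfolding cmod_power2 by (simp add: power2_eq_square algebra_simps)
  ultimately have "((\<lambda>i. (cmod (a i - b i))^2) has_sum ((l2norm a)^2 + (-2) * Re (ip b a) + (l2norm b)^2)) UNIV"
    by simp
  then show ?thesis unfolding l2d_def l2norm_sq by (simp add: infsumI)
qed

lemma has_sum_sum_fin:
  fixes f :: "'d \<Rightarrow> 'a \<Rightarrow> complex"
  assumes "finite D" "\<And>d. d \<in> D \<Longrightarrow> (f d has_sum s d) A"
  shows "((\<lambda>i. \<Sum>d\<in>D. f d i) has_sum (\<Sum>d\<in>D. s d)) A"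
  using assms by (induction D rule: finite_induct) (auto intro!: has_sum_add)

lemma ip_sum_left:
  assumes "finite D" "\<And>d. d \<in> D \<Longrightarrow> is_l2 (a d)" "is_l2 v"
  shows "ip (\<lambda>i. \<Sum>d\<in>D. a d i) v = (\<Sum>d\<in>D. ip (a d) v)"
proof -
  have "((\<lambda>i. \<Sum>d\<in>D. a d i * cnj (v i)) has_sum (\<Sum>d\<in>D. ip (a d) v)) UNIV"
    using assms ip_summable unfolding ip_def
    by (intro has_sum_sum_fin) (auto simp: summable_iff_has_sum_infsum[symmetric])
  then show ?thesis unfolding ip_def by (simp add: infsumI sum_distrib_right)
qed

lemma ip_sum_right:
  assumes "finite D" "\<And>d. d \<in> D \<Longrightarrow> is_l2 (b d)" "is_l2 u"
  shows "ip u (\<lambda>i. \<Sum>d\<in>D. b d i) = (\<Sum>d\<in>D. ip u (b d))"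
proof -
  have "((\<lambda>i. \<Sum>d\<in>D. u i * cnj (b d i)) has_sum (\<Sum>d\<in>D. ip u (b d))) UNIV"
    using assms ip_summable unfolding ip_def
    by (intro has_sum_sum_fin) (auto simp: summable_iff_has_sum_infsum[symmetric])
  then show ?thesis unfolding ip_def by (simp add: infsumI sum_distrib_left)
qed

lemma infsum_shift_int:
  "(\<Sum>\<^sub>\<infinity>i. f (i + s)) = (\<Sum>\<^sub>\<infinity>i::int. (f i :: complex))"
  using infsum_reindex_bij_betw[OF bij_shift_int[of s], of f] by simp

lemma adj_identity:
  assumes C: "bnd T w C" and u: "is_l2 u" and v: "is_l2 v"
  shows "ip (mv T u) v = ip u (mv (adj T) v)"
proof -
  let ?D = "{- int w .. int w}"
  define a where "a d = (\<lambda>i. T i (i + d) * u (i + d))" for d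
  define b where "b d = (\<lambda>i. adj T i (i + d) * v (i + d))" for d
  have la: "is_l2 (a d)" for d unfolding a_def using comp_l2[OF C u] by blast
  have lb: "is_l2 (b d)" for d unfolding b_def using comp_l2[OF bnd_adj[OF C] v] by blast
  have "mv T u = (\<lambda>i. \<Sum>d\<in>?D. a d i)" unfolding a_def by (rule ext) (rule mv_band[OF C])
  then have L: "ip (mv T u) v = (\<Sum>d\<in>?D. ip (a d) v)" using ip_sum_left[of ?D a v] la v by simp
  have "mv (adj T) v = (\<lambda>i. \<Sum>d\<in>?D. b d i)" unfolding b_def by (rule ext) (rule mv_band[OF bnd_adj[OF C]])
  then have R: "ip u (mv (adj T) v) = (\<Sum>d\<in>?D. ip u (b d))" using ip_sum_right[of ?D b u] lb u by simp
  have R2: "(\<Sum>d\<in>?D. ip u (b d)) = (\<Sum>d\<in>?D. ip u (b (- d)))"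
    by (rule sum.reindex_bij_witness[where i="\<lambda>d. - d" and j="\<lambda>d. - d"]) auto
  have eq: "ip (a d) v = ip u (b (- d))" for d
  proof -
    have "ip (a d) v = (\<Sum>\<^sub>\<infinity>i. T i (i + d) * u (i + d) * cnj (v i))" unfolding ip_def a_def ..
    also have "\<dots> = (\<Sum>\<^sub>\<infinity>i. T (i + - d) (i + - d + d) * u (i + - d + d) * cnj (v (i + - d)))"
      by (rule infsum_shift_int[of "\<lambda>i. T i (i + d) * u (i + d) * cnj (v i)" "- d", symmetric])
    also have "\<dots> = ip u (b (- d))" unfolding ip_def b_def adj_def
      by (rule infsum_cong) (simp add: algebra_simps)
    finally show ?thesis .
  qed
  show ?thesis unfolding L R R2 using eq by simp
qed



definition enum_int :: "nat \<Rightarrow> int" where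
  "enum_int n = (if even n then int (n div 2) else - int (n div 2) - 1)"

lemma enum_int_surj: "\<exists>n. enum_int n = i"
proof (cases "i \<ge> 0")
  case True
  then show ?thesis by (intro exI[of _ "2 * nat i"]) (simp add: enum_int_def)
next
  case False
  then show ?thesis by (intro exI[of _ "2 * nat (- i - 1) + 1"]) (simp add: enum_int_def)
qed

lemma diag_extract:
  fixes x :: "nat \<Rightarrow> int \<Rightarrow> complex"
  assumes "\<And>k i. cmod (x k i) \<le> B"
  shows "\<exists>r. strict_mono r \<and> (\<forall>i. convergent (\<lambda>k. x (r k) i))"
proof -
  interpret subseqs "\<lambda>n s. convergent (\<lambda>k. x (s k) (enum_int n))"
  proof
    fix n and s :: "nat \<Rightarrow> nat" assume "strict_mono s"
    have "bounded (range (\<lambda>k. x (s k) (enum_int n)))"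
      unfolding bounded_iff using assms by blast
    then obtain l r where "strict_mono (r :: nat \<Rightarrow> nat)" "((\<lambda>k. x (s k) (enum_int n)) \<circ> r) \<longlonglongrightarrow> l"
      using bounded_imp_convergent_subsequence by blast
    then show "\<exists>r'. strict_mono r' \<and> convergent (\<lambda>k. x ((s \<circ> r') k) (enum_int n))"
      by (intro exI[of _ r]) (auto simp: convergent_def o_def)
  qed
  have "convergent (\<lambda>k. x (diagseq k) (enum_int n))" for n
  proof -
    have "convergent (\<lambda>k. x ((diagseq \<circ> (+) (Suc n)) k) (enum_int n))"
    proof (rule diagseq_holds)
      fix r s n assume "strict_mono (r :: nat \<Rightarrow> nat)" "convergent (\<lambda>k. x (s k) (enum_int n))"
      then show "convergent (\<lambda>k. x ((s \<circ> r) k) (enum_int n))"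
        using convergent_subseq_convergent[of "\<lambda>k. x (s k) (enum_int n)" r] by (simp add: o_def)
    qed
    then obtain l where "(\<lambda>k. x (diagseq (k + Suc n)) (enum_int n)) \<longlonglongrightarrow> l"
      by (auto simp: convergent_def o_def add.commute)
    then show ?thesis using LIMSEQ_offset convergent_def by blast
  qed
  then have "\<forall>i. convergent (\<lambda>k. x (diagseq k) i)" using enum_int_surj by metis
  then show ?thesis using subseq_diagseq by blast
qed

lemma L2on_D: "x \<in> L2on S \<Longrightarrow> is_l2 x" "x \<in> L2on S \<Longrightarrow> i \<notin> S \<Longrightarrow> x i = 0"
  unfolding L2on_def supp_def by auto

lemma L2on_I: "is_l2 x \<Longrightarrow> (\<And>i. i \<notin> S \<Longrightarrow> x i = 0) \<Longrightarrow> x \<in> L2on S"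
  unfolding L2on_def supp_def by auto

lemma L2on_diff:
  assumes "x \<in> L2on S" "y \<in> L2on S" shows "(\<lambda>i. x i - y i) \<in> L2on S"
proof (rule L2on_I)
  show "is_l2 (\<lambda>i. x i - y i)" using l2_diff[OF L2on_D(1)[OF assms(1)] L2on_D(1)[OF assms(2)]] by blast
  fix i assume "i \<notin> S" then show "x i - y i = 0" using L2on_D(2)[OF assms(1)] L2on_D(2)[OF assms(2)] by simp
qed

lemma L2on_add:
  assumes "x \<in> L2on S" "y \<in> L2on S" shows "(\<lambda>i. x i + y i) \<in> L2on S"
proof (rule L2on_I)
  show "is_l2 (\<lambda>i. x i + y i)" using l2_add[OF L2on_D(1)[OF assms(1)] L2on_D(1)[OF assms(2)]] by blast
  fix i assume "i \<notin> S" then show "x i + y i = 0" using L2on_D(2)[OF assms(1)] L2on_D(2)[OF assms(2)] by simp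
qed

lemma L2on_scale:
  assumes "x \<in> L2on S" shows "(\<lambda>i. c * x i) \<in> L2on S"
proof (rule L2on_I)
  show "is_l2 (\<lambda>i. c * x i)" using l2_scale[OF L2on_D(1)[OF assms(1)]] by blast
  fix i assume "i \<notin> S" then show "c * x i = 0" using L2on_D(2)[OF assms(1)] by simp
qed

lemma L2on_zero: "(\<lambda>i. 0) \<in> L2on S"
  unfolding L2on_def supp_def using l2_zero_vec by simp

lemma opS_in:
  assumes "bnd T w C" "x \<in> L2on S"
  shows "opS T S x \<in> L2on S"
proof -
  have "is_l2 (mv T x)" using mv_bounded[OF assms(1)] assms(2) unfolding L2on_def by blast
  then show ?thesis unfolding L2on_def opS_def using l2_restr
    by (auto simp: supp_def restr_def)
qed

lemma opS_diff: "bnd T w C \<Longrightarrow> opS T S (\<lambda>i. x i - y i) = (\<lambda>i. opS T S x i - opS T S y i)"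
  unfolding opS_def mv_diff[of T w C] restr_def by auto

lemma opS_add: "bnd T w C \<Longrightarrow> opS T S (\<lambda>i. x i + y i) = (\<lambda>i. opS T S x i + opS T S y i)"
  unfolding opS_def mv_add[of T w C] restr_def by auto

lemma opS_scale: "bnd T w C \<Longrightarrow> opS T S (\<lambda>i. c * x i) = (\<lambda>i. c * opS T S x i)"
  unfolding opS_def mv_scale[of T w C] restr_def by auto

lemma opS_zero: "opS T S (\<lambda>i. 0) = (\<lambda>i. 0)"
  unfolding opS_def mv_zero restr_def by auto

lemma l2norm_zero_vec[simp]: "l2norm (\<lambda>i. 0) = 0"
  using l2_zero_vec by (simp add: order_antisym)

lemma closed_image_ball:
  assumes C: "bnd T w C"
  shows "closedin (Metric_space.mtopology (L2on S) l2d)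
           {y \<in> L2on S. \<exists>x\<in>L2on S. l2norm x \<le> B \<and> opS T S x = y}"
proof -
  interpret M: Metric_space "L2on S" l2d by (rule l2_metric)
  let ?E = "{y \<in> L2on S. \<exists>x\<in>L2on S. l2norm x \<le> B \<and> opS T S x = y}"
  show ?thesis unfolding M.metric_closedin_iff_sequentially_closed
  proof (intro conjI allI impI)
    show "?E \<subseteq> L2on S" by blast
    fix \<sigma> l assume a: "range \<sigma> \<subseteq> ?E \<and> limitin M.mtopology \<sigma> l sequentially"
    then have lM: "l \<in> L2on S" and ev: "\<And>e. e > 0 \<Longrightarrow> eventually (\<lambda>k. \<sigma> k \<in> L2on S \<and> l2d (\<sigma> k) l < e) sequentially"
      unfolding M.limitin_metric by auto
    have "\<forall>k. \<exists>x. x \<in> L2on S \<and> l2norm x \<le> B \<and> opS T S x = \<sigma> k" using a by blast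
    then obtain xs where xs: "\<And>k. xs k \<in> L2on S" "\<And>k. l2norm (xs k) \<le> B" "\<And>k. opS T S (xs k) = \<sigma> k"
      by metis
    have xl2: "is_l2 (xs k)" for k using xs(1) unfolding L2on_def by auto
    have "cmod (xs k i) \<le> B" for k i using l2_coord[OF xl2] xs(2) order_trans by blast
    then obtain r where r: "strict_mono r" "\<And>i. convergent (\<lambda>k. xs (r k) i)"
      using diag_extract[of xs B] by blast
    define xl where "xl i = lim (\<lambda>k. xs (r k) i)" for i
    have xlim: "(\<lambda>k. xs (r k) i) \<longlonglongrightarrow> xl i" for i
      unfolding xl_def using r(2) convergent_LIMSEQ_iff by blast
    have B0: "0 \<le> B" using xs(2)[of 0] l2norm_nonneg order_trans by blast
    have xlb: "is_l2 xl \<and> l2norm xl \<le> B"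
      by (rule l2_fatou[where z = "\<lambda>k. xs (r k)" and K = 0, OF xlim _ B0]) (use xl2 xs(2) in auto)
    have sxl: "supp xl \<subseteq> S"
    proof
      fix i assume i: "i \<in> supp xl"
      show "i \<in> S"
      proof (rule ccontr)
        assume "i \<notin> S"
        then have "xs (r k) i = 0" for k using xs(1)[of "r k"] unfolding L2on_def supp_def by auto
        then have "xl i = 0" using xlim[of i] LIMSEQ_unique[OF _ tendsto_const] by fastforce
        then show False using i unfolding supp_def by auto
      qed
    qed
    have xlM: "xl \<in> L2on S" using xlb sxl unfolding L2on_def by auto
    have "opS T S xl = l"
    proof
      fix i
      have l1: "(\<lambda>k. opS T S (xs (r k)) i) \<longlonglongrightarrow> opS T S xl i"
        unfolding opS_def restr_def mv_band[OF C]
        by (cases "i \<in> S") (auto intro!: tendsto_sum tendsto_mult_left xlim)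
      have "(\<lambda>k. \<sigma> k i) \<longlonglongrightarrow> l i"
      proof (rule tendstoI)
        fix e :: real assume e: "e > 0"
        show "eventually (\<lambda>k. dist (\<sigma> k i) (l i) < e) sequentially"
          using ev[OF e]
        proof (rule eventually_mono)
          fix k assume k: "\<sigma> k \<in> L2on S \<and> l2d (\<sigma> k) l < e"
          then have "is_l2 (\<lambda>i. \<sigma> k i - l i)" using l2_diff lM unfolding L2on_def by blast
          then have "cmod (\<sigma> k i - l i) \<le> l2d (\<sigma> k) l" unfolding l2d_def by (rule l2_coord)
          then show "dist (\<sigma> k i) (l i) < e" using k by (simp add: dist_norm)
        qed
      qed
      then have "(\<lambda>k. \<sigma> (r k) i) \<longlonglongrightarrow> l i" using LIMSEQ_subseq_LIMSEQ[OF _ r(1)] by (simp add: o_def)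
      then have "(\<lambda>k. opS T S (xs (r k)) i) \<longlonglongrightarrow> l i" using xs(3) by simp
      then show "opS T S xl i = l i" using l1 LIMSEQ_unique by blast
    qed
    then show "l \<in> ?E" using lM xlM xlb by blast
  qed
qed

lemma bounded_inverse:
  assumes C: "bnd T w C" and bij: "bij_betw (opS T natset) (L2on natset) (L2on natset)"
  shows "\<exists>c>0. \<forall>x\<in>L2on natset. l2norm x \<le> c * l2norm (opS T natset x)"
proof -
  interpret M: Metric_space "L2on natset" l2d by (rule l2_metric)
  let ?X = "L2on natset"
  let ?S = "opS T natset"
  define E where "E n = {y \<in> ?X. \<exists>x\<in>?X. l2norm x \<le> real n \<and> ?S x = y}" for n :: nat
  have cl: "closedin M.mtopology (E n)" for n unfolding E_def by (rule closed_image_ball[OF C])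
  have un: "\<Union>(range E) = ?X"
  proof
    show "\<Union>(range E) \<subseteq> ?X"
    proof
      fix y assume "y \<in> \<Union>(range E)"
      then obtain m where "y \<in> E m" by blast
      then show "y \<in> ?X" unfolding E_def by simp
    qed
    show "?X \<subseteq> \<Union>(range E)"
    proof
      fix y assume y: "y \<in> ?X"
      have "?S ` ?X = ?X" using bij by (simp add: bij_betw_def)
      then have "y \<in> ?S ` ?X" using y by simp
      then obtain x where x: "x \<in> ?X" "y = ?S x" by (rule imageE)
      have h: "l2norm x \<le> real (nat \<lceil>l2norm x\<rceil>)" by (rule real_nat_ceiling_ge)
      have "y \<in> ?X \<and> (\<exists>x'\<in>?X. l2norm x' \<le> real (nat \<lceil>l2norm x\<rceil>) \<and> ?S x' = y)"
        using x y h by blast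
      then have "y \<in> E (nat \<lceil>l2norm x\<rceil>)" unfolding E_def mem_Collect_eq .
      then show "y \<in> \<Union>(range E)" by blast
    qed
  qed
  have "\<exists>n. M.mtopology interior_of (E n) \<noteq> {}"
  proof (rule ccontr)
    assume "\<not> ?thesis"
    then have "M.mtopology interior_of \<Union>(range E) = {}"
      by (intro M.metric_Baire_category_alt l2_complete) (use cl in auto)
    moreover have "M.mtopology interior_of ?X = ?X"
      using interior_of_topspace[of M.mtopology] by simp
    ultimately have "?X = {}" unfolding un by simp
    then show False using L2on_zero by blast
  qed
  then obtain n y0 where y0: "y0 \<in> M.mtopology interior_of (E n)" by blast
  have op: "openin M.mtopology (M.mtopology interior_of (E n))" by (rule openin_interior_of)
  obtain r where r: "r > 0" "M.mball y0 r \<subseteq> M.mtopology interior_of (E n)"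
    using M.openin_mtopology[THEN iffD1, OF op] y0 by blast
  have rE: "M.mball y0 r \<subseteq> E n" using r(2) interior_of_subset[of M.mtopology "E n"] by (rule subset_trans)
  have y0E: "y0 \<in> E n" using interior_of_subset[of M.mtopology "E n"] y0 by (rule subsetD)
  have "y0 \<in> ?X \<and> (\<exists>x\<in>?X. l2norm x \<le> real n \<and> ?S x = y0)" using y0E unfolding E_def mem_Collect_eq .
  then have y0X: "y0 \<in> ?X" and ex0: "\<exists>x\<in>?X. l2norm x \<le> real n \<and> ?S x = y0" by auto
  then obtain x0 where x0: "x0 \<in> ?X" "l2norm x0 \<le> real n" "?S x0 = y0" by blast
  have inj: "inj_on ?S ?X" using bij by (simp add: bij_betw_def)
  have key: "l2norm x \<le> (4 * real n / r) * l2norm (?S x)" if x: "x \<in> ?X" for x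
  proof (cases "l2norm (?S x) = 0")
    case True
    have Sx: "?S x \<in> ?X" by (rule opS_in[OF C x])
    then have "?S x = (\<lambda>i. 0)" using l2_zero[OF L2on_D(1)[OF Sx] True] by (intro ext) simp
    also have "\<dots> = ?S (\<lambda>i. 0)" by (simp add: opS_zero)
    finally have "x = (\<lambda>i. 0)" using inj_onD[OF inj _ x L2on_zero] by blast
    then show ?thesis by (simp add: opS_zero)
  next
    case False
    then have pos: "l2norm (?S x) > 0" using l2norm_nonneg[of "?S x"] by linarith
    define t where "t = r / (2 * l2norm (?S x))"
    have t0: "t > 0" unfolding t_def using pos r(1) by simp
    define y where "y = (\<lambda>i. complex_of_real t * ?S x i)"
    have Sx: "?S x \<in> ?X" by (rule opS_in[OF C x])
    have yX: "y \<in> ?X" unfolding y_def by (rule L2on_scale[OF Sx])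
    have ct: "cmod (complex_of_real t) = t" using t0 by (simp add: norm_of_real)
    have "l2norm y = t * l2norm (?S x)" unfolding y_def
      using l2_scale[OF L2on_D(1)[OF Sx], of "complex_of_real t"] ct by simp
    also have "\<dots> = r / 2" unfolding t_def using pos by simp
    finally have ny: "l2norm y = r / 2" .
    have y1X: "(\<lambda>i. y0 i + y i) \<in> ?X" by (rule L2on_add[OF y0X yX])
    have "l2d y0 (\<lambda>i. y0 i + y i) = l2norm y" unfolding l2d_def
      by (subst l2_uminus(2)[symmetric]) simp
    then have "(\<lambda>i. y0 i + y i) \<in> M.mball y0 r" using y0X y1X ny r(1) by simp
    then have "(\<lambda>i. y0 i + y i) \<in> E n" using rE by (rule subsetD[rotated])
    then have "(\<exists>x\<in>?X. l2norm x \<le> real n \<and> ?S x = (\<lambda>i. y0 i + y i))" unfolding E_def mem_Collect_eq by blast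
    then obtain x1 where x1: "x1 \<in> ?X" "l2norm x1 \<le> real n" "?S x1 = (\<lambda>i. y0 i + y i)" by blast
    have dX: "(\<lambda>i. x1 i - x0 i) \<in> ?X" by (rule L2on_diff[OF x1(1) x0(1)])
    have txX: "(\<lambda>i. complex_of_real t * x i) \<in> ?X" by (rule L2on_scale[OF x])
    have "?S (\<lambda>i. x1 i - x0 i) = y" unfolding opS_diff[OF C] x1(3) x0(3) by simp
    also have "\<dots> = ?S (\<lambda>i. complex_of_real t * x i)" unfolding y_def opS_scale[OF C] ..
    finally have "(\<lambda>i. x1 i - x0 i) = (\<lambda>i. complex_of_real t * x i)"
      using inj_onD[OF inj _ dX txX] by blast
    then have "t * l2norm x = l2norm (\<lambda>i. x1 i - x0 i)"
      using l2_scale[OF L2on_D(1)[OF x], of "complex_of_real t"] ct by simp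
    also have "\<dots> \<le> l2norm x1 + l2norm x0" using l2_diff x1(1) x0(1) unfolding L2on_def by blast
    also have "\<dots> \<le> 2 * real n" using x1(2) x0(2) by simp
    finally have "t * l2norm x \<le> 2 * real n" .
    then have "r * l2norm x \<le> 4 * real n * l2norm (?S x)"
      unfolding t_def using pos by (simp add: field_simps)
    then show ?thesis using r(1) by (simp add: field_simps)
  qed
  show ?thesis
  proof (intro exI[of _ "4 * real n / r + 1"] conjI ballI)
    show "0 < 4 * real n / r + 1" using r(1) by (simp add: add_nonneg_pos)
    fix x assume x: "x \<in> ?X"
    have "l2norm x \<le> (4 * real n / r) * l2norm (?S x)" by (rule key[OF x])
    also have "\<dots> \<le> (4 * real n / r + 1) * l2norm (?S x)" by (rule mult_right_mono) simp_all
    finally show "l2norm x \<le> (4 * real n / r + 1) * l2norm (?S x)" .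
  qed
qed



lemma ip_scale_left: "ip (\<lambda>i. c * u i) v = c * ip u v"
  unfolding ip_def by (simp add: mult.assoc infsum_cmult_right')

lemma lnu_lower:
  assumes "bnd T w C" "m > 0" "m \<le> lnu_set S T R" "is_l2 x" "supp x \<subseteq> S"
  shows "l2norm x \<le> (1 / m) * l2norm (restr R (mv T x))"
proof -
  have "m * l2norm x \<le> lnu_set S T R * l2norm x" using assms(3) by (intro mult_right_mono) auto
  also have "\<dots> \<le> l2norm (restr R (mv T x))" by (rule lnu_set_le[OF assms(1,4,5)])
  finally show ?thesis using assms(2) by (simp add: field_simps)
qed

lemma natbound_to_UNIV:
  assumes A: "band_op A w" "csubs A UNIV w = csubs A natset w" "T \<in> Ts A"
    and c: "c > 0" and b: "\<forall>x\<in>L2on natset. l2norm x \<le> c * l2norm (opS T natset x)"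
  shows "\<forall>x. is_l2 x \<longrightarrow> l2norm x \<le> c * l2norm (mv T x)"
proof -
  obtain C where C: "bnd T w C" using Ts_bnd[OF A(1,3)] by blast
  have "1 / c \<le> lnu_set natset T natset" unfolding lnu_set_def
  proof (rule cInf_greatest)
    show "{l2norm (restr natset (mv T x)) |x. is_l2 x \<and> supp x \<subseteq> natset \<and> l2norm x = 1} \<noteq> {}"
      using delta_props[of 1] unfolding natset_def by (auto intro!: exI[of _ "delta 1"])
    fix e assume "e \<in> {l2norm (restr natset (mv T x)) |x. is_l2 x \<and> supp x \<subseteq> natset \<and> l2norm x = 1}"
    then obtain x where x: "e = l2norm (restr natset (mv T x))" "is_l2 x" "supp x \<subseteq> natset" "l2norm x = 1"
      by blast
    have "1 \<le> c * e" using b x unfolding L2on_def opS_def by auto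
    then show "1 / c \<le> e" using c by (simp add: field_simps)
  qed
  also have "\<dots> \<le> lnu_set UNIV T UNIV" by (rule part3[OF A])
  finally have m: "1 / c \<le> lnu_set UNIV T UNIV" .
  show ?thesis
  proof (intro allI impI)
    fix x assume "is_l2 x"
    from lnu_lower[OF C _ m this] c show "l2norm x \<le> c * l2norm (mv T x)" by simp
  qed
qed

lemma ip_restr_left:
  assumes "\<And>i. i \<notin> S \<Longrightarrow> v i = 0"
  shows "ip (restr S u) v = ip u v"
  unfolding ip_def restr_def by (rule infsum_cong) (use assms in auto)

lemma ip_restr_right:
  assumes "\<And>i. i \<notin> S \<Longrightarrow> u i = 0"
  shows "ip u (restr S v) = ip u v"
  unfolding ip_def restr_def by (rule infsum_cong) (use assms in auto)

lemma adj_natbound: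
  assumes C: "bnd T w C" and bij: "bij_betw (opS T natset) (L2on natset) (L2on natset)"
    and c: "c > 0" and b: "\<forall>x\<in>L2on natset. l2norm x \<le> c * l2norm (opS T natset x)"
  shows "\<forall>y\<in>L2on natset. l2norm y \<le> c * l2norm (opS (adj T) natset y)"
proof
  fix y assume y: "y \<in> L2on natset"
  have "opS T natset ` L2on natset = L2on natset" using bij by (simp add: bij_betw_def)
  then have "y \<in> opS T natset ` L2on natset" using y by simp
  then obtain u where u: "u \<in> L2on natset" "y = opS T natset u" by (rule imageE)
  have lu: "is_l2 u" and ly: "is_l2 y" using u(1) y by (auto dest: L2on_D)
  have u0: "\<And>i. i \<notin> natset \<Longrightarrow> u i = 0" using L2on_D(2)[OF u(1)] .
  have y0: "\<And>i. i \<notin> natset \<Longrightarrow> y i = 0" using L2on_D(2)[OF y] .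
  have la: "is_l2 (opS (adj T) natset y)" using opS_in[OF bnd_adj[OF C] y] by (rule L2on_D)
  have "ip y y = ip (restr natset (mv T u)) y" using u(2) unfolding opS_def by simp
  also have "\<dots> = ip (mv T u) y" by (rule ip_restr_left[OF y0])
  also have "\<dots> = ip u (mv (adj T) y)" by (rule adj_identity[OF C lu ly])
  also have "\<dots> = ip u (opS (adj T) natset y)" unfolding opS_def by (rule ip_restr_right[OF u0, symmetric])
  finally have e: "ip y y = ip u (opS (adj T) natset y)" .
  have "(l2norm y)^2 = Re (ip y y)" using ip_Re_self[OF ly] by simp
  also have "\<dots> \<le> cmod (ip y y)" by (rule complex_Re_le_cmod)
  also have "\<dots> \<le> l2norm u * l2norm (opS (adj T) natset y)" unfolding e by (rule ip_CS[OF lu la])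
  also have "\<dots> \<le> (c * l2norm y) * l2norm (opS (adj T) natset y)"
    using b u by (intro mult_right_mono) auto
  finally have h: "(l2norm y)^2 \<le> c * l2norm y * l2norm (opS (adj T) natset y)" .
  show "l2norm y \<le> c * l2norm (opS (adj T) natset y)"
  proof (cases "l2norm y = 0")
    case True then show ?thesis using c by simp
  next
    case False
    then have "l2norm y > 0" using l2norm_nonneg[of y] by linarith
    then show ?thesis using h by (simp add: power2_eq_square mult.assoc)
  qed
qed

lemma surj_UNIV:
  assumes C: "bnd T w C" and c: "c > 0"
    and bA: "\<forall>e. is_l2 e \<longrightarrow> l2norm e \<le> c * l2norm (mv (adj T) e)"
    and y: "is_l2 y"
  shows "\<exists>x. is_l2 x \<and> mv T x = y"
proof -
  interpret M: Metric_space "L2on UNIV" l2d by (rule l2_metric)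
  define T' where "T' = adj T"
  have C': "bnd T' w C" unfolding T'_def by (rule bnd_adj[OF C])
  define M where "M = (2 * real w + 1) * C"
  define m where "m = 1 / c"
  have m0: "m > 0" unfolding m_def using c by simp
  have bT: "is_l2 (mv T v) \<and> l2norm (mv T v) \<le> M * l2norm v" if "is_l2 v" for v
    unfolding M_def using mv_bounded[OF C that] by (simp add: mult.assoc)
  have bT': "is_l2 (mv T' v) \<and> l2norm (mv T' v) \<le> M * l2norm v" if "is_l2 v" for v
    unfolding M_def using mv_bounded[OF C' that] by (simp add: mult.assoc)
  have lowT': "m * l2norm e \<le> l2norm (mv T' e)" if "is_l2 e" for e
    using bA that c unfolding T'_def m_def by (simp add: field_simps)
  have mM: "m \<le> M"
  proof -
    have "m * l2norm (delta 0) \<le> l2norm (mv T' (delta 0))" by (rule lowT'[OF delta_props(1)])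
    also have "\<dots> \<le> M * l2norm (delta 0)" using bT'[OF delta_props(1)] by blast
    finally show ?thesis using delta_props(2)[of 0] by simp
  qed
  then have M0: "M > 0" using m0 by simp
  define \<alpha> where "\<alpha> = m^2 / M^4"
  have a0: "\<alpha> > 0" unfolding \<alpha>_def using m0 M0 by simp
  define q where "q = sqrt (1 - m^4 / M^4)"
  have mM4: "m^4 / M^4 \<le> 1" using mM m0 by (simp add: power_mono)
  have mM4': "m^4 / M^4 > 0" using m0 M0 by simp
  have q1: "q < 1" unfolding q_def using mM4' mM4 by simp
  have q0: "q \<ge> 0" unfolding q_def using mM4 by simp
  define H where "H v = mv T (mv T' v)" for v
  have lH: "is_l2 (H v) \<and> l2norm (H v) \<le> M^2 * l2norm v" if v: "is_l2 v" for v
  proof -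
    have a: "is_l2 (mv T' v)" "l2norm (mv T' v) \<le> M * l2norm v" using bT'[OF v] by auto
    have b: "is_l2 (H v)" "l2norm (H v) \<le> M * l2norm (mv T' v)" unfolding H_def using bT[OF a(1)] by auto
    have "M * l2norm (mv T' v) \<le> M * (M * l2norm v)" using a(2) M0 by (intro mult_left_mono) auto
    then have "l2norm (H v) \<le> M * (M * l2norm v)" using b(2) by linarith
    then show ?thesis using b(1) by (simp add: power2_eq_square mult.assoc)
  qed
  have Hdiff: "H (\<lambda>i. a i - b i) = (\<lambda>i. H a i - H b i)" for a b
    unfolding H_def mv_diff[OF C'] mv_diff[OF C] ..
  define f where "f z = (\<lambda>i. z i - complex_of_real \<alpha> * (H z i - y i))" for z
  have lf: "is_l2 (f z)" if z: "is_l2 z" for z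
  proof -
    have "is_l2 (\<lambda>i. H z i - y i)" using l2_diff[OF conjunct1[OF lH[OF z]] y] by blast
    then have "is_l2 (\<lambda>i. complex_of_real \<alpha> * (H z i - y i))" using l2_scale by blast
    then show ?thesis unfolding f_def using l2_diff[OF z] by blast
  qed
  have contr: "l2d (f z1) (f z2) \<le> q * l2d z1 z2" if z1: "is_l2 z1" and z2: "is_l2 z2" for z1 z2
  proof -
    define e where "e = (\<lambda>i. z1 i - z2 i)"
    have le: "is_l2 e" unfolding e_def using l2_diff[OF z1 z2] by blast
    define b where "b = (\<lambda>i. complex_of_real \<alpha> * H e i)"
    have He: "is_l2 (H e)" "l2norm (H e) \<le> M^2 * l2norm e" using lH[OF le] by auto
    have lb: "is_l2 b" unfolding b_def using l2_scale[OF He(1)] by blast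
    have nb: "l2norm b = \<alpha> * l2norm (H e)" unfolding b_def using l2_scale[OF He(1)] a0
      by (simp add: norm_of_real)
    have fd: "(\<lambda>i. f z1 i - f z2 i) = (\<lambda>i. e i - b i)"
    proof
      fix i
      have h: "H e i = H z1 i - H z2 i" unfolding e_def Hdiff ..
      have "f z1 i - f z2 i = (z1 i - z2 i) - complex_of_real \<alpha> * (H z1 i - H z2 i)"
        unfolding f_def by (simp add: algebra_simps)
      also have "\<dots> = e i - b i" unfolding b_def h by (simp add: e_def)
      finally show "f z1 i - f z2 i = e i - b i" .
    qed
    have lTe: "is_l2 (mv T' e)" using bT'[OF le] by blast
    have "ip b e = complex_of_real \<alpha> * ip (mv T (mv T' e)) e" unfolding b_def H_def by (rule ip_scale_left)
    also have "ip (mv T (mv T' e)) e = ip (mv T' e) (mv T' e)"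
      unfolding T'_def by (rule adj_identity[OF C lTe[unfolded T'_def] le])
    finally have "Re (ip b e) = \<alpha> * (l2norm (mv T' e))^2" using ip_Re_self[OF lTe] by simp
    moreover have "(m * l2norm e)^2 \<le> (l2norm (mv T' e))^2"
      using lowT'[OF le] m0 by (intro power_mono) auto
    ultimately have Re1: "\<alpha> * (m * l2norm e)^2 \<le> Re (ip b e)" using a0 by simp
    have nb2: "(l2norm b)^2 \<le> (\<alpha> * (M^2 * l2norm e))^2"
      unfolding nb using He(2) a0 by (intro power_mono mult_left_mono) auto
    define E where "E = (l2norm e)^2"
    define r4 where "r4 = m^4 / M^4"
    have h1: "\<alpha> * m^2 = r4" unfolding \<alpha>_def r4_def by (simp add: power_add[symmetric])
    have h2: "\<alpha>^2 * (M^2)^2 = r4" unfolding \<alpha>_def r4_def using M0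
      by (simp add: power_mult_distrib power_divide power_mult[symmetric] field_simps)
    have "(l2d (f z1) (f z2))^2 = (l2d e b)^2" unfolding l2d_def fd ..
    also have "\<dots> = (l2norm e)^2 - 2 * Re (ip b e) + (l2norm b)^2" by (rule ip_expand[OF le lb])
    also have "\<dots> \<le> (l2norm e)^2 - 2 * (\<alpha> * (m * l2norm e)^2) + (\<alpha> * (M^2 * l2norm e))^2"
      using Re1 nb2 by linarith
    also have "\<dots> = E - 2 * ((\<alpha> * m^2) * E) + (\<alpha>^2 * (M^2)^2) * E"
      unfolding E_def by (simp add: power_mult_distrib mult.assoc)
    also have "\<dots> = (1 - r4) * E" unfolding h1 h2 by (simp add: algebra_simps)
    also have "\<dots> = (q * l2d z1 z2)^2"
    proof -
      have "q^2 = 1 - r4" unfolding q_def r4_def using mM4 by simp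
      moreover have "l2d z1 z2 = l2norm e" unfolding l2d_def e_def ..
      ultimately show ?thesis unfolding E_def by (simp add: power_mult_distrib)
    qed
    finally have "(l2d (f z1) (f z2))^2 \<le> (q * l2d z1 z2)^2" .
    moreover have "0 \<le> q * l2d z1 z2" using q0 unfolding l2d_def by simp
    ultimately show ?thesis by (rule power2_le_imp_le)
  qed
  obtain z where z: "z \<in> L2on UNIV" "f z = z"
  proof (rule M.Banach_fixedpoint_thm[OF l2_complete _ _ q1])
    show "L2on UNIV \<noteq> {}" using L2on_zero by blast
    show "f \<in> L2on UNIV \<rightarrow> L2on UNIV" using lf unfolding L2on_def by (auto simp: supp_def)
    fix z1 z2 assume "z1 \<in> L2on UNIV" "z2 \<in> L2on UNIV"
    then show "l2d (f z1) (f z2) \<le> q * l2d z1 z2" using contr unfolding L2on_def by auto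
  qed
  have lz: "is_l2 z" using z(1) unfolding L2on_def by auto
  have "H z = y"
  proof
    fix i
    have "z i - complex_of_real \<alpha> * (H z i - y i) = z i" using fun_cong[OF z(2), of i] unfolding f_def .
    then show "H z i = y i" using a0 by simp
  qed
  then show ?thesis unfolding H_def using bT'[OF lz] by blast
qed

lemma core:
  assumes A: "band_op A w" "csubs A UNIV w = csubs A natset w" "T \<in> Ts A"
    and inv: "invertible_on T natset"
    and c: "c > 0" and b: "\<forall>x\<in>L2on natset. l2norm x \<le> c * l2norm (opS T natset x)"
  shows "invertible_on T UNIV \<and> (\<forall>x. is_l2 x \<longrightarrow> l2norm x \<le> c * l2norm (mv T x))"
proof -
  obtain C where C: "bnd T w C" using Ts_bnd[OF A(1,3)] by blast
  have bij: "bij_betw (opS T natset) (L2on natset) (L2on natset)" using inv unfolding invertible_on_def .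
  have bU: "\<forall>x. is_l2 x \<longrightarrow> l2norm x \<le> c * l2norm (mv T x)"
    by (rule natbound_to_UNIV[OF A c b])
  have bA: "\<forall>e. is_l2 e \<longrightarrow> l2norm e \<le> c * l2norm (mv (adj T) e)"
    by (rule natbound_to_UNIV[OF A(1,2) Ts_adj[OF A(3)] c adj_natbound[OF C bij c b]])
  have opU: "opS T UNIV = mv T" unfolding opS_def by simp
  have LU: "L2on UNIV = {x. is_l2 x}" unfolding L2on_def by auto
  have "bij_betw (mv T) {x. is_l2 x} {x. is_l2 x}"
    unfolding bij_betw_def
  proof (intro conjI)
    show "inj_on (mv T) {x. is_l2 x}"
    proof (rule inj_onI)
      fix x1 x2 assume x: "x1 \<in> {x. is_l2 x}" "x2 \<in> {x. is_l2 x}" "mv T x1 = mv T x2"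
      have ld: "is_l2 (\<lambda>i. x1 i - x2 i)" using l2_diff x by blast
      have "mv T (\<lambda>i. x1 i - x2 i) = (\<lambda>i. 0)" unfolding mv_diff[OF C] x(3) by simp
      then have "l2norm (\<lambda>i. x1 i - x2 i) \<le> 0" using bU ld by auto
      then have "l2norm (\<lambda>i. x1 i - x2 i) = 0" using l2norm_nonneg by (metis order_antisym)
      then have "x1 i - x2 i = 0" for i using l2_zero[OF ld] by blast
      then show "x1 = x2" by auto
    qed
    show "mv T ` {x. is_l2 x} = {x. is_l2 x}"
    proof
      show "mv T ` {x. is_l2 x} \<subseteq> {x. is_l2 x}" using mv_bounded[OF C] by blast
      show "{x. is_l2 x} \<subseteq> mv T ` {x. is_l2 x}"
      proof
        fix y assume "y \<in> {x. is_l2 x}"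
        then obtain x where "is_l2 x" "mv T x = y" using surj_UNIV[OF C c bA] by blast
        then show "y \<in> mv T ` {x. is_l2 x}" by blast
      qed
    qed
  qed
  then have "invertible_on T UNIV" unfolding invertible_on_def opU LU .
  then show ?thesis using bU by blast
qed



lemma part4:
  assumes A: "band_op A w" "csubs A UNIV w = csubs A natset w" "T \<in> Ts A"
  shows "invnorm T UNIV \<le> invnorm T natset"
proof (cases "invertible_on T natset")
  case False
  then show ?thesis by (simp add: invnorm_def)
next
  case True
  obtain C where C: "bnd T w C" using Ts_bnd[OF A(1,3)] by blast
  let ?X = "L2on natset"
  let ?S = "opS T natset"
  let ?Y = "{y \<in> ?X. l2norm y = 1}"
  define I where "I = (SUP y \<in> ?Y. ereal (l2norm (inv_into ?X ?S y)))"
  have bij: "bij_betw ?S ?X ?X" using True unfolding invertible_on_def .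
  have inj: "inj_on ?S ?X" and img: "?S ` ?X = ?X" using bij by (auto simp: bij_betw_def)
  have In: "invnorm T natset = I" unfolding invnorm_def I_def using True by simp
  show ?thesis
  proof (cases "I = \<infinity>")
    case True then show ?thesis using In by simp
  next
    case False
    define y1 where "y1 = delta 1"
    have y1X: "y1 \<in> ?X" unfolding y1_def L2on_def natset_def using delta_props[of 1] by auto
    have y1Y: "y1 \<in> ?Y" using y1X delta_props[of 1] unfolding y1_def by auto
    have y1i: "y1 \<in> ?S ` ?X" using y1X img by simp
    define x1 where "x1 = inv_into ?X ?S y1"
    have x1X: "x1 \<in> ?X" unfolding x1_def by (rule inv_into_into[OF y1i])
    have Sx1: "?S x1 = y1" unfolding x1_def by (rule f_inv_into_f[OF y1i])
    have x1pos: "l2norm x1 > 0"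
    proof (rule ccontr)
      assume "\<not> l2norm x1 > 0"
      then have "l2norm x1 = 0" using l2norm_nonneg[of x1] by linarith
      then have "x1 = (\<lambda>i. 0)" using l2_zero[OF L2on_D(1)[OF x1X]] by auto
      then have "y1 = (\<lambda>i. 0)" using Sx1 opS_zero by metis
      then show False unfolding y1_def delta_def by (metis zero_neq_one)
    qed
    have Ige: "ereal (l2norm x1) \<le> I" unfolding I_def x1_def by (rule SUP_upper[OF y1Y])
    then have "I \<noteq> - \<infinity>" by auto
    then obtain c0 where c0: "I = ereal c0" using False by (cases I) auto
    have c0pos: "c0 > 0" using Ige x1pos c0 by simp
    have ub: "l2norm (inv_into ?X ?S y) \<le> c0" if "y \<in> ?Y" for y
    proof -
      have "ereal (l2norm (inv_into ?X ?S y)) \<le> I" unfolding I_def by (rule SUP_upper[OF that])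
      then show ?thesis using c0 by simp
    qed
    have b: "\<forall>x\<in>?X. l2norm x \<le> c0 * l2norm (?S x)"
    proof
      fix x assume x: "x \<in> ?X"
      have Sx: "?S x \<in> ?X" by (rule opS_in[OF C x])
      show "l2norm x \<le> c0 * l2norm (?S x)"
      proof (cases "l2norm (?S x) = 0")
        case True
        then have "?S x = (\<lambda>i. 0)" using l2_zero[OF L2on_D(1)[OF Sx] True] by (intro ext) simp
        also have "\<dots> = ?S (\<lambda>i. 0)" by (simp add: opS_zero)
        finally have "x = (\<lambda>i. 0)" using inj_onD[OF inj _ x L2on_zero] by blast
        then show ?thesis using c0pos by (simp add: opS_zero)
      next
        case False
        then have pos: "l2norm (?S x) > 0" using l2norm_nonneg[of "?S x"] by linarith
        define t where "t = 1 / l2norm (?S x)"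
        have t0: "t > 0" unfolding t_def using pos by simp
        have ct: "cmod (complex_of_real t) = t" using t0 by (simp add: norm_of_real)
        define y where "y = (\<lambda>i. complex_of_real t * ?S x i)"
        have yX: "y \<in> ?X" unfolding y_def by (rule L2on_scale[OF Sx])
        have "l2norm y = t * l2norm (?S x)" unfolding y_def
          using l2_scale[OF L2on_D(1)[OF Sx], of "complex_of_real t"] ct by simp
        also have "\<dots> = 1" unfolding t_def using pos by simp
        finally have yY: "y \<in> ?Y" using yX by simp
        have txX: "(\<lambda>i. complex_of_real t * x i) \<in> ?X" by (rule L2on_scale[OF x])
        have "?S (\<lambda>i. complex_of_real t * x i) = y" unfolding y_def opS_scale[OF C] ..
        then have "inv_into ?X ?S y = (\<lambda>i. complex_of_real t * x i)"
          by (rule inv_into_f_eq[OF inj txX])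
        then have "l2norm (\<lambda>i. complex_of_real t * x i) \<le> c0" using ub[OF yY] by simp
        then have "t * l2norm x \<le> c0" using l2_scale[OF L2on_D(1)[OF x], of "complex_of_real t"] ct by simp
        then show ?thesis unfolding t_def using pos by (simp add: field_simps)
      qed
    qed
    have cr: "invertible_on T UNIV \<and> (\<forall>x. is_l2 x \<longrightarrow> l2norm x \<le> c0 * l2norm (mv T x))"
      by (rule core[OF A True c0pos b])
    then have invU: "invertible_on T UNIV" and bU: "\<forall>x. is_l2 x \<longrightarrow> l2norm x \<le> c0 * l2norm (mv T x)"
      by auto
    have bijU: "bij_betw (opS T UNIV) (L2on UNIV) (L2on UNIV)" using invU unfolding invertible_on_def .
    have imgU: "opS T UNIV ` L2on UNIV = L2on UNIV" using bijU by (simp add: bij_betw_def)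
    have "(SUP y \<in> {y \<in> L2on UNIV. l2norm y = 1}. ereal (l2norm (inv_into (L2on UNIV) (opS T UNIV) y))) \<le> ereal c0"
    proof (rule SUP_least)
      fix y assume y: "y \<in> {y \<in> L2on UNIV. l2norm y = 1}"
      then have yi: "y \<in> opS T UNIV ` L2on UNIV" using imgU by simp
      define x where "x = inv_into (L2on UNIV) (opS T UNIV) y"
      have xU: "x \<in> L2on UNIV" unfolding x_def by (rule inv_into_into[OF yi])
      have Sx: "opS T UNIV x = y" unfolding x_def by (rule f_inv_into_f[OF yi])
      then have "mv T x = y" unfolding opS_def by simp
      then have "l2norm x \<le> c0" using bU L2on_D(1)[OF xU] y by auto
      then show "ereal (l2norm (inv_into (L2on UNIV) (opS T UNIV) y)) \<le> ereal c0" unfolding x_def[symmetric] by simp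
    qed
    then have "invnorm T UNIV \<le> ereal c0" unfolding invnorm_def using invU by simp
    then show ?thesis using In c0 by simp
  qed
qed

lemma shiftm_Ts: "shiftm A z \<in> Ts A"
  unfolding Ts_def by blast

lemma spec_incl:
  assumes A: "band_op A w" "csubs A UNIV w = csubs A natset w"
  shows "spec A UNIV \<subseteq> spec A natset"
proof
  fix z assume z: "z \<in> spec A UNIV"
  show "z \<in> spec A natset"
  proof (rule ccontr)
    assume "z \<notin> spec A natset"
    then have inv: "invertible_on (shiftm A z) natset" unfolding spec_def by simp
    obtain C where C: "bnd (shiftm A z) w C" using Ts_bnd[OF A(1) shiftm_Ts] by blast
    obtain c where c: "c > 0" "\<forall>x\<in>L2on natset. l2norm x \<le> c * l2norm (opS (shiftm A z) natset x)"
      using bounded_inverse[OF C inv[unfolded invertible_on_def]] by blast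
    have "invertible_on (shiftm A z) UNIV" using core[OF A shiftm_Ts inv c] by blast
    then show False using z unfolding spec_def by simp
  qed
qed

lemma pspec_incl:
  assumes A: "band_op A w" "csubs A UNIV w = csubs A natset w"
  shows "pspec \<epsilon> A UNIV \<subseteq> pspec \<epsilon> A natset"
proof
  fix z assume "z \<in> pspec \<epsilon> A UNIV"
  then have "ereal (1 / \<epsilon>) < invnorm (shiftm A z) UNIV" unfolding pspec_def by simp
  also have "\<dots> \<le> invnorm (shiftm A z) natset" by (rule part4[OF A shiftm_Ts])
  finally show "z \<in> pspec \<epsilon> A natset" unfolding pspec_def by simp
qed

theorem proposition4p5:
  fixes A :: mat and w :: nat
  assumes "band_op A w"
  shows "(\<forall>T \<in> Ts A. \<forall>N::nat. N \<ge> 1 \<longrightarrow>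
           lnu_loc N T natset natset =
             Min ({lnu_loc N T natset UNIV} \<union>
                  {lnu_set {int j .. int j + int N - 1} T natset | j. j \<in> {1..w}})) \<and>
         (csubs A UNIV w = csubs A natset w \<longrightarrow>
           (\<forall>T \<in> Ts A. \<forall>N::nat. N \<ge> 1 \<longrightarrow>
              lnu_loc N T natset UNIV = lnu_loc N T UNIV UNIV \<and>
              lnu_loc N T natset natset =
                Min ({lnu_loc N T UNIV UNIV} \<union>
                     {lnu_set {int j .. int j + int N - 1} T natset | j. j \<in> {1..w}})) \<and>
           (\<forall>T \<in> Ts A. lnu_set natset T natset \<le> lnu_set UNIV T UNIV \<and>
                        invnorm T natset \<ge> invnorm T UNIV) \<and>
           spec A UNIV \<subseteq> spec A natset \<and>
           (\<forall>\<epsilon>>0. pspec \<epsilon> A UNIV \<subseteq> pspec \<epsilon> A natset))"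
proof -
  have P1: "\<forall>T \<in> Ts A. \<forall>N::nat. N \<ge> 1 \<longrightarrow>
           lnu_loc N T natset natset =
             Min ({lnu_loc N T natset UNIV} \<union>
                  {lnu_set {int j .. int j + int N - 1} T natset | j. j \<in> {1..w}})"
  proof (intro ballI allI impI)
    fix T N assume T: "T \<in> Ts A" and N: "(N::nat) \<ge> 1"
    obtain C where C: "bnd T w C" using Ts_bnd[OF assms T] by blast
    show "lnu_loc N T natset natset =
             Min ({lnu_loc N T natset UNIV} \<union>
                  {lnu_set {int j .. int j + int N - 1} T natset | j. j \<in> {1..w}})"
      by (rule part1[OF C N])
  qed
  have P2: "csubs A UNIV w = csubs A natset w \<longrightarrow>
           (\<forall>T \<in> Ts A. \<forall>N::nat. N \<ge> 1 \<longrightarrow>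
              lnu_loc N T natset UNIV = lnu_loc N T UNIV UNIV \<and>
              lnu_loc N T natset natset =
                Min ({lnu_loc N T UNIV UNIV} \<union>
                     {lnu_set {int j .. int j + int N - 1} T natset | j. j \<in> {1..w}})) \<and>
           (\<forall>T \<in> Ts A. lnu_set natset T natset \<le> lnu_set UNIV T UNIV \<and>
                        invnorm T natset \<ge> invnorm T UNIV) \<and>
           spec A UNIV \<subseteq> spec A natset \<and>
           (\<forall>\<epsilon>>0. pspec \<epsilon> A UNIV \<subseteq> pspec \<epsilon> A natset)"
  proof
    assume cs: "csubs A UNIV w = csubs A natset w"
    have Q1: "\<forall>T \<in> Ts A. \<forall>N::nat. N \<ge> 1 \<longrightarrow>
              lnu_loc N T natset UNIV = lnu_loc N T UNIV UNIV \<and>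
              lnu_loc N T natset natset =
                Min ({lnu_loc N T UNIV UNIV} \<union>
                     {lnu_set {int j .. int j + int N - 1} T natset | j. j \<in> {1..w}})"
    proof (intro ballI allI impI)
      fix T N assume T: "T \<in> Ts A" and N: "(N::nat) \<ge> 1"
      obtain C where C: "bnd T w C" using Ts_bnd[OF assms T] by blast
      have e: "lnu_loc N T natset UNIV = lnu_loc N T UNIV UNIV" by (rule part2a[OF assms cs T N])
      show "lnu_loc N T natset UNIV = lnu_loc N T UNIV UNIV \<and>
              lnu_loc N T natset natset =
                Min ({lnu_loc N T UNIV UNIV} \<union>
                     {lnu_set {int j .. int j + int N - 1} T natset | j. j \<in> {1..w}})"
        using part1[OF C N] e by simp
    qed
    have Q2: "\<forall>T \<in> Ts A. lnu_set natset T natset \<le> lnu_set UNIV T UNIV \<and>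
                        invnorm T natset \<ge> invnorm T UNIV"
      using part3[OF assms cs] part4[OF assms cs] by blast
    have Q3: "spec A UNIV \<subseteq> spec A natset" by (rule spec_incl[OF assms cs])
    have Q4: "\<forall>\<epsilon>>0. pspec \<epsilon> A UNIV \<subseteq> pspec \<epsilon> A natset" using pspec_incl[OF assms cs] by blast
    show "(\<forall>T \<in> Ts A. \<forall>N::nat. N \<ge> 1 \<longrightarrow>
              lnu_loc N T natset UNIV = lnu_loc N T UNIV UNIV \<and>
              lnu_loc N T natset natset =
                Min ({lnu_loc N T UNIV UNIV} \<union>
                     {lnu_set {int j .. int j + int N - 1} T natset | j. j \<in> {1..w}})) \<and>
           (\<forall>T \<in> Ts A. lnu_set natset T natset \<le> lnu_set UNIV T UNIV \<and>
                        invnorm T natset \<ge> invnorm T UNIV) \<and>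
           spec A UNIV \<subseteq> spec A natset \<and>
           (\<forall>\<epsilon>>0. pspec \<epsilon> A UNIV \<subseteq> pspec \<epsilon> A natset)"
      using Q1 Q2 Q3 Q4 by (intro conjI)
  qed
  show ?thesis using P1 P2 by (intro conjI)
qed

end
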